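(* Let $T$ be Takagi's function on $[0,1]$, $T(x)=\sum_{n=1}^\infty 2^{-n}\phi^{(n)}(x)$, with $\phi(x)=2x$ on $[0,1/2]$, $\phi(x)=2-2x$ on $[1/2,1]$. Let $x\in(0,1)$ be non-dyadic, with binary expansion $x=\sum_{k\ge1}2^{-k}\varepsilon_k$, and write $x=\sum_{n\ge1}2^{-a_n}$, $1-x=\sum_{n\ge1}2^{-b_n}$ with $\{a_n\},\{b_n\}$ strictly increasing sequences of positive integers. Then the limit $$\lim_{h\to0}\frac{T(x+h)-T(x)}{h\log_2(1/|h|)}$$ exists if and only if $x$ is density-regular, in which case the limit equals $d_0(x)-d_1(x)$.
   Context: $d_1(x):=\lim_{n\to\infty}\frac1n\sum_{k=1}^n\varepsilon_k$ (when it exists) and $d_0(x):=1-d_1(x)$. The point $x$ is density-regular if $d_1(x)$ exists and one of the following holds: (a) $0<d_1(x)<1$; (b) $d_1(x)=0$ and $a_{n+1}/a_n\to1$; (c) $d_1(x)=1$ and $b_{n+1}/b_n\to1$. A dyadic point is one of the form $k/2^m$. *)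

theory Defs
  imports Complex_Main "HOL-Library.Infinite_Set"
begin

definition phi :: "real \<Rightarrow> real" where
  "phi x = (if x \<le> 1/2 then 2 * x else 2 - 2 * x)"

definition takagi :: "real \<Rightarrow> real" where
  "takagi x = (\<Sum>n. (1/2) ^ Suc n * (phi ^^ Suc n) x)"

definition bdigit :: "real \<Rightarrow> nat \<Rightarrow> nat" where
  "bdigit x k = nat (\<lfloor>2 ^ k * x\<rfloor> mod 2)"

text \<open>a x n for n \<ge> 1: the n-th position (in increasing order) of a digit 1, i.e. x = sum 2^(-a_n).\<close>
definition apos :: "real \<Rightarrow> nat \<Rightarrow> nat" where
  "apos x n = enumerate {k. 1 \<le> k \<and> bdigit x k = 1} (n - 1)"

definition bpos :: "real \<Rightarrow> nat \<Rightarrow> nat" where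
  "bpos x n = apos (1 - x) n"

definition digit_avg :: "real \<Rightarrow> nat \<Rightarrow> real" where
  "digit_avg x n = (1 / real n) * (\<Sum>k=1..n. real (bdigit x k))"

definition d1 :: "real \<Rightarrow> real" where
  "d1 x = lim (digit_avg x)"

definition d0 :: "real \<Rightarrow> real" where
  "d0 x = 1 - d1 x"

definition density_regular :: "real \<Rightarrow> bool" where
  "density_regular x \<longleftrightarrow> convergent (digit_avg x) \<and>
     ((0 < d1 x \<and> d1 x < 1) \<or>
      (d1 x = 0 \<and> (\<lambda>n. real (apos x (Suc n)) / real (apos x n)) \<longlonglongrightarrow> 1) \<or>
      (d1 x = 1 \<and> (\<lambda>n. real (bpos x (Suc n)) / real (bpos x n)) \<longlonglongrightarrow> 1))"

definition dyadic :: "real \<Rightarrow> bool" where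
  "dyadic x \<longleftrightarrow> (\<exists>(k::int) (m::nat). x = real_of_int k / 2 ^ m)"

end

theory Submission
  imports Defs
begin


definition gg :: "real \<Rightarrow> real" where "gg y = \<bar>y - of_int (round y)\<bar>"

lemma round_half: "\<bar>y - of_int (round y)\<bar> \<le> 1/2"
  using of_int_round_ge[of y] of_int_round_le[of y] by linarith

lemma gg_le: "gg y \<le> \<bar>y - of_int m\<bar>"
proof -
  have r: "\<bar>y - of_int (round y)\<bar> \<le> 1/2" by (rule round_half)
  show ?thesis
  proof (cases "m = round y")
    case True then show ?thesis by (simp add: gg_def)
  next
    case False
    then have "\<bar>m - round y\<bar> \<ge> 1" by linarith
    then have "\<bar>of_int m - of_int (round y)\<bar> \<ge> (1::real)"
      by (metis of_int_1_le_iff of_int_abs of_int_diff)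
    then show ?thesis using r unfolding gg_def by linarith
  qed
qed

lemma gg_ge: assumes "\<And>m::int. a \<le> \<bar>y - of_int m\<bar>" shows "a \<le> gg y"
  using assms[of "round y"] by (simp add: gg_def)

lemma gg_nonneg: "0 \<le> gg y" by (simp add: gg_def)
lemma gg_half: "gg y \<le> 1/2" using round_half by (simp add: gg_def)
lemma gg_abs: "gg y \<le> \<bar>y\<bar>" using gg_le[of y 0] by simp
lemma gg_int: "gg (of_int m) = 0" using gg_le[of "of_int m" m] gg_nonneg[of "of_int m"] by simp

lemma gg_shift: "gg (y + of_int m) = gg y"
proof -
  have "gg (y + of_int m) \<le> gg y"
    using gg_le[of "y + of_int m" "round y + m"] by (simp add: gg_def)
  moreover have "gg y \<le> gg (y + of_int m)"
    using gg_le[of y "round (y + of_int m) - m"] by (simp add: gg_def algebra_simps)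
  ultimately show ?thesis by simp
qed

lemma gg_neg: "gg (- y) = gg y"
proof -
  have "gg (-y) \<le> gg y"
    using gg_le[of "-y" "- round y"] by (simp add: gg_def abs_minus_commute)
  moreover have "gg y \<le> gg (-y)"
    using gg_le[of y "- round (-y)"] by (simp add: gg_def)
  ultimately show ?thesis by simp
qed

lemma gg_int_minus: "gg (of_int m - y) = gg y"
  using gg_shift[of "-y" m] gg_neg[of y] by simp

lemma gg_lip: "\<bar>gg u - gg v\<bar> \<le> \<bar>u - v\<bar>"
proof -
  have "gg u \<le> \<bar>u - of_int (round v)\<bar>" by (rule gg_le)
  moreover have "gg v \<le> \<bar>v - of_int (round u)\<bar>" by (rule gg_le)
  ultimately show ?thesis unfolding gg_def by linarith
qed

lemma gg_lin:
  assumes "of_int j / 2 \<le> y" "y \<le> (of_int j + 1) / 2"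
  shows "gg y = (if even j then y - of_int j / 2 else (of_int j + 1) / 2 - y)"
proof (cases "even j")
  case True
  then obtain i where j: "j = 2 * i" by blast
  have "gg y \<le> \<bar>y - of_int i\<bar>" by (rule gg_le)
  moreover have "y - of_int i \<le> gg y"
  proof (rule gg_ge)
    fix m :: int
    show "y - of_int i \<le> \<bar>y - of_int m\<bar>"
    proof (cases "m \<le> i")
      case True then show ?thesis by (smt (verit) of_int_le_iff)
    next
      case False then have "of_int m \<ge> (of_int i + 1 :: real)" by simp
      then show ?thesis using assms j by simp
    qed
  qed
  ultimately show ?thesis using assms j True by simp
next
  case False
  then obtain i where j: "j = 2 * i + 1" by (metis oddE)
  have "gg y \<le> \<bar>y - of_int (i+1)\<bar>" by (rule gg_le)
  moreover have "of_int i + 1 - y \<le> gg y"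
  proof (rule gg_ge)
    fix m :: int
    show "of_int i + 1 - y \<le> \<bar>y - of_int m\<bar>"
    proof (cases "m \<ge> i + 1")
      case True then show ?thesis by (smt (verit) of_int_le_iff of_int_add of_int_1)
    next
      case False then have "of_int m \<le> (of_int i :: real)" by simp
      then show ?thesis using assms j by simp
    qed
  qed
  ultimately show ?thesis using assms j False by simp
qed

lemma gg_small: "0 \<le> y \<Longrightarrow> y \<le> 1/2 \<Longrightarrow> gg y = y"
  using gg_lin[of 0 y] by simp



lemma floor_pow_le: "2^d * \<lfloor>2^a * y\<rfloor> \<le> \<lfloor>(2::real)^(a+d) * y\<rfloor>"
proof -
  have "real_of_int (2^d * \<lfloor>2^a * y\<rfloor>) \<le> 2^d * (2^a * y)"
    using of_int_floor_le[of "2^a*y"] by simp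
  also have "\<dots> = 2^(a+d) * y" by (simp add: power_add)
  finally show ?thesis by (simp add: le_floor_iff)
qed

lemma floor_pow_lt: "\<lfloor>(2::real)^(a+d) * y\<rfloor> < 2^d * (\<lfloor>2^a * y\<rfloor> + 1)"
proof -
  have "real_of_int \<lfloor>(2::real)^(a+d) * y\<rfloor> \<le> 2^(a+d) * y"
    by (rule of_int_floor_le)
  also have "\<dots> = 2^d * (2^a * y)" by (simp add: power_add)
  also have "\<dots> < 2^d * (of_int \<lfloor>2^a * y\<rfloor> + 1)"
    using real_of_int_floor_add_one_gt[of "2^a*y"] by simp
  finally have "real_of_int \<lfloor>(2::real)^(a+d) * y\<rfloor> < real_of_int (2^d * (\<lfloor>2^a * y\<rfloor> + 1))"
    by simp
  then show ?thesis by (simp only: of_int_less_iff)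
qed

lemma bdigit_le1: "bdigit y k \<le> 1"
  unfolding bdigit_def by (simp add: nat_le_iff)

lemma bdigit_cases: "bdigit y k = 0 \<or> bdigit y k = 1"
  using bdigit_le1[of y k] by linarith

lemma floor_Suc: "\<lfloor>(2::real)^(Suc k) * y\<rfloor> = 2 * \<lfloor>2^k * y\<rfloor> + int (bdigit y (Suc k))"
proof -
  define F where "F = \<lfloor>(2::real)^k * y\<rfloor>"
  define F' where "F' = \<lfloor>(2::real)^(Suc k) * y\<rfloor>"
  have a: "2 * F \<le> F'" using floor_pow_le[of 1 k y] unfolding F_def F'_def by simp
  have b: "F' < 2 * (F + 1)" using floor_pow_lt[of k 1 y] unfolding F_def F'_def by simp
  have "F' = 2 * F + F' mod 2"
  proof -
    have "F' mod 2 = (F' - 2*F) mod 2" by (simp add: mod_diff_eq[symmetric])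
    also have "\<dots> = F' - 2*F" using a b by (intro mod_pos_pos_trivial) auto
    finally show ?thesis by simp
  qed
  moreover have "int (bdigit y (Suc k)) = F' mod 2" unfolding bdigit_def F'_def by simp
  ultimately show ?thesis unfolding F_def F'_def by simp
qed

lemma floor_zero_digits:
  assumes "\<And>i. 1 \<le> i \<Longrightarrow> i \<le> j \<Longrightarrow> bdigit y (N+i) = 0"
  shows "\<lfloor>(2::real)^(N+j) * y\<rfloor> = 2^j * \<lfloor>2^N * y\<rfloor>"
  using assms
proof (induction j)
  case 0 then show ?case by simp
next
  case (Suc j)
  have "\<lfloor>(2::real)^(Suc (N+j)) * y\<rfloor> = 2 * \<lfloor>2^(N+j) * y\<rfloor> + int (bdigit y (Suc (N+j)))"
    by (rule floor_Suc)
  moreover have "bdigit y (Suc (N+j)) = 0" using Suc.prems[of "Suc j"] by simp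
  moreover have "\<lfloor>(2::real)^(N+j) * y\<rfloor> = 2^j * \<lfloor>2^N * y\<rfloor>" using Suc by simp
  ultimately show ?case by simp
qed

lemma frac_lt_zero_digits:
  assumes "\<And>i. 1 \<le> i \<Longrightarrow> i \<le> j \<Longrightarrow> bdigit y (N+i) = 0"
  shows "2^N * y - of_int \<lfloor>2^N * y\<rfloor> < (1/2::real)^j"
proof -
  have e: "\<lfloor>(2::real)^(N+j) * y\<rfloor> = 2^j * \<lfloor>2^N * y\<rfloor>" by (rule floor_zero_digits[OF assms])
  have "(2::real)^(N+j) * y < of_int \<lfloor>(2::real)^(N+j) * y\<rfloor> + 1" by linarith
  then have "2^j * (2^N * y) < 2^j * of_int \<lfloor>2^N * y\<rfloor> + 1" using e by (simp add: power_add algebra_simps)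
  then have "2^j * (2^N * y - of_int \<lfloor>2^N * y\<rfloor>) < 1" by (simp add: algebra_simps)
  then show ?thesis by (simp add: power_one_over field_simps)
qed

lemma frac_ge_digit:
  assumes "1 \<le> j" "bdigit y (N+j) = 1"
  shows "(1/2::real)^j \<le> 2^N * y - of_int \<lfloor>2^N * y\<rfloor>"
proof -
  obtain i where j: "j = Suc i" using assms by (cases j) auto
  have "\<lfloor>(2::real)^(Suc (N+i)) * y\<rfloor> = 2 * \<lfloor>2^(N+i) * y\<rfloor> + 1"
    using floor_Suc[of "N+i" y] assms j by simp
  moreover have "2^i * \<lfloor>2^N * y\<rfloor> \<le> \<lfloor>(2::real)^(N+i) * y\<rfloor>" by (rule floor_pow_le)
  ultimately have "2^j * \<lfloor>2^N * y\<rfloor> + 1 \<le> \<lfloor>(2::real)^(N+j) * y\<rfloor>" using j by simp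
  then have "real_of_int (2^j * \<lfloor>2^N * y\<rfloor> + 1) \<le> 2^(N+j) * y"
    by (meson floor_le_iff le_floor_iff order.trans of_int_floor_le)
  then have "1 \<le> 2^j * (2^N * y - of_int \<lfloor>2^N * y\<rfloor>)" by (simp add: power_add algebra_simps)
  then show ?thesis by (simp add: power_one_over field_simps)
qed

lemma nondyadic_frac_pos:
  assumes "\<not> dyadic y" shows "0 < 2^N * y - of_int \<lfloor>(2::real)^N * y\<rfloor>"
proof -
  have "2^N * y \<noteq> of_int \<lfloor>(2::real)^N * y\<rfloor>"
  proof
    assume "2^N * y = of_int \<lfloor>(2::real)^N * y\<rfloor>"
    then have "y = of_int \<lfloor>(2::real)^N * y\<rfloor> / 2^N" by (simp add: field_simps)
    then show False using assms unfolding dyadic_def by blast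
  qed
  then show ?thesis using of_int_floor_le[of "2^N*y"] by linarith
qed

lemma nondyadic_compl: "\<not> dyadic y \<Longrightarrow> \<not> dyadic (1 - y)"
proof
  assume a: "\<not> dyadic y" and "dyadic (1 - y)"
  then obtain k m where "1 - y = real_of_int k / 2^m" unfolding dyadic_def by blast
  then have "y = real_of_int (2^m - k) / 2^m" by (simp add: field_simps)
  then show False using a unfolding dyadic_def by blast
qed

lemma floor_compl:
  assumes "\<not> dyadic y"
  shows "\<lfloor>(2::real)^N * (1 - y)\<rfloor> = 2^N - 1 - \<lfloor>2^N * y\<rfloor>"
proof -
  have p: "0 < 2^N * y - of_int \<lfloor>(2::real)^N * y\<rfloor>" by (rule nondyadic_frac_pos[OF assms])
  have q: "2^N * y < of_int \<lfloor>(2::real)^N * y\<rfloor> + 1" by linarith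
  show ?thesis
  proof (rule floor_unique)
    show "real_of_int (2 ^ N - 1 - \<lfloor>2 ^ N * y\<rfloor>) \<le> 2 ^ N * (1 - y)" using q by (simp add: algebra_simps)
    show "2 ^ N * (1 - y) < real_of_int (2 ^ N - 1 - \<lfloor>2 ^ N * y\<rfloor>) + 1" using p by (simp add: algebra_simps)
  qed
qed

lemma frac_compl:
  assumes "\<not> dyadic y"
  shows "2^N * (1-y) - of_int \<lfloor>(2::real)^N * (1 - y)\<rfloor> = 1 - (2^N * y - of_int \<lfloor>2^N * y\<rfloor>)"
proof -
  have "real_of_int \<lfloor>(2::real)^N * (1 - y)\<rfloor> = real_of_int (2^N - 1 - \<lfloor>2^N * y\<rfloor>)"
    using floor_compl[OF assms, of N] by (simp only:)
  then have "real_of_int \<lfloor>(2::real)^N * (1 - y)\<rfloor> = 2^N - 1 - real_of_int \<lfloor>2^N * y\<rfloor>" by simp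
  then show ?thesis by (simp add: algebra_simps)
qed

lemma bdigit_compl:
  assumes "\<not> dyadic y" "1 \<le> k"
  shows "bdigit (1 - y) k = 1 - bdigit y k"
proof -
  define F where "F = \<lfloor>(2::real)^k * y\<rfloor>"
  have "even ((2::int)^k)" using assms(2) by simp
  then obtain c where c: "(2::int)^k = 2*c" by blast
  have "(2*c - 1 - F) mod 2 = 1 - F mod 2" by presburger
  then have "(2^k - 1 - F) mod 2 = 1 - F mod 2" using c by simp
  moreover have "F mod 2 = 0 \<or> F mod 2 = 1" by presburger
  ultimately show ?thesis unfolding bdigit_def floor_compl[OF assms(1)] F_def[symmetric]
    by auto
qed



definition GG :: "real \<Rightarrow> real" where "GG u = (\<Sum>n. gg (2^n * u) / 2^n)"
definition tail :: "nat \<Rightarrow> real \<Rightarrow> real" where "tail N u = (\<Sum>n. gg (2^(n+N) * u) / 2^(n+N))"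
definition DD :: "nat \<Rightarrow> real \<Rightarrow> real" where "DD N x = (\<Sum>m<N. 1 - 2 * real (bdigit x (Suc m)))"

lemma term_le: "gg (2^(n+N) * u) / 2^(n+N) \<le> (1/2) * (1/2)^N * (1/2)^n"
proof -
  have "gg (2^(n+N) * u) / 2^(n+N) \<le> (1/2) / 2^(n+N)"
    using gg_half by (intro divide_right_mono) auto
  also have "\<dots> = (1/2) * (1/2)^N * (1/2)^n" by (simp add: power_add power_one_over)
  finally show ?thesis .
qed

lemma summable_tl: "summable (\<lambda>n. gg (2^(n+N) * u) / 2^(n+N))"
proof (rule summable_comparison_test')
  show "summable (\<lambda>n. (1/2::real) * (1/2)^N * (1/2)^n)"
    by (intro summable_mult summable_geometric) auto
  fix n show "norm (gg (2^(n+N) * u) / 2^(n+N)) \<le> (1/2) * (1/2)^N * (1/2)^n"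
    using term_le gg_nonneg by simp
qed

lemma summable_GG: "summable (\<lambda>n. gg (2^n * u) / 2^n)"
  using summable_tl[of 0 u] by simp

lemma tail_nonneg: "0 \<le> tail N u"
  unfolding tail_def by (intro suminf_nonneg summable_tl) (simp add: gg_nonneg)

lemma tail_le: "tail N u \<le> (1/2)^N"
proof -
  have "tail N u \<le> (\<Sum>n. (1/2::real) * (1/2)^N * (1/2)^n)"
    unfolding tail_def
    by (intro suminf_le summable_tl summable_mult summable_geometric term_le) auto
  also have "\<dots> = (1/2) * (1/2)^N * (\<Sum>n. (1/2::real)^n)"
    by (intro suminf_mult summable_geometric) auto
  also have "\<dots> = (1/2)^N" by (simp add: suminf_geometric)
  finally show ?thesis .
qed

lemma GG_split: "GG u = (\<Sum>m<N. gg (2^m * u) / 2^m) + tail N u"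
  unfolding GG_def tail_def using suminf_split_initial_segment[OF summable_GG, of u N] by simp

lemma tail_Suc: "tail N u = gg (2^N * u) / 2^N + tail (Suc N) u"
proof -
  have "tail (Suc N) u = (\<Sum>n. (\<lambda>n. gg (2^(n+N) * u) / 2^(n+N)) (Suc n))"
    unfolding tail_def by simp
  also have "\<dots> = tail N u - gg (2^N * u) / 2^N"
    unfolding tail_def by (subst suminf_split_head[OF summable_tl]) simp
  finally show ?thesis by simp
qed

lemma tail_diff: "\<bar>tail N u - tail N v\<bar> \<le> real d * \<bar>u - v\<bar> + (1/2)^(N+d)"
proof (induction d arbitrary: N)
  case 0
  then show ?case using tail_nonneg[of N u] tail_nonneg[of N v] tail_le[of N u] tail_le[of N v] by simp
next
  case (Suc d)
  have h: "\<bar>gg (2^N * u) / 2^N - gg (2^N * v) / 2^N\<bar> \<le> \<bar>u - v\<bar>"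
  proof -
    have "\<bar>gg (2^N * u) / 2^N - gg (2^N * v) / 2^N\<bar> = \<bar>gg (2^N * u) - gg (2^N * v)\<bar> / 2^N"
      by (simp add: diff_divide_distrib[symmetric])
    also have "\<dots> \<le> \<bar>2^N * u - 2^N * v\<bar> / 2^N" by (intro divide_right_mono gg_lip) auto
    also have "\<dots> = \<bar>u - v\<bar>" by (simp add: right_diff_distrib[symmetric] abs_mult)
    finally show ?thesis .
  qed
  have IH: "\<bar>tail (Suc N) u - tail (Suc N) v\<bar> \<le> real d * \<bar>u - v\<bar> + (1/2)^(Suc N + d)" by (rule Suc.IH)
  have tri: "\<bar>(gg (2^N * u) / 2^N - gg (2^N * v) / 2^N) + (tail (Suc N) u - tail (Suc N) v)\<bar>
     \<le> \<bar>gg (2^N * u) / 2^N - gg (2^N * v) / 2^N\<bar> + \<bar>tail (Suc N) u - tail (Suc N) v\<bar>"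
    by (rule abs_triangle_ineq)
  have eq: "tail N u - tail N v = (gg (2^N * u) / 2^N - gg (2^N * v) / 2^N) + (tail (Suc N) u - tail (Suc N) v)"
    using tail_Suc[of N u] tail_Suc[of N v] by simp
  have e2: "(1/2::real)^(Suc N + d) = (1/2)^(N + Suc d)" by simp
  have e3: "real (Suc d) * \<bar>u - v\<bar> = real d * \<bar>u - v\<bar> + \<bar>u - v\<bar>" by (simp add: algebra_simps)
  show ?case using IH tri eq e2 e3 h by linarith
qed

lemma tail_lower: "(\<Sum>i<d. gg (2^(N+i) * u) / 2^(N+i)) \<le> tail N u"
proof (induction d arbitrary: N)
  case 0 then show ?case by (simp add: tail_nonneg)
next
  case (Suc d)
  have "(\<Sum>i<Suc d. gg (2^(N+i) * u) / 2^(N+i)) = gg (2^N * u) / 2^N + (\<Sum>i<d. gg (2^(Suc N+i) * u) / 2^(Suc N+i))"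
    by (subst sum.lessThan_Suc_shift) simp
  also have "\<dots> \<le> gg (2^N * u) / 2^N + tail (Suc N) u" using Suc.IH[of "Suc N"] by simp
  finally show ?case using tail_Suc[of N u] by simp
qed

lemma tail_dyadic: "tail N (of_int J / 2^N) = 0"
proof -
  have "gg (2^(n+N) * (of_int J / 2^N)) = 0" for n
  proof -
    have e: "(2::real)^(n+N) * (of_int J / 2^N) = of_int (2^n * J)" by (simp add: power_add)
    show ?thesis unfolding e by (rule gg_int)
  qed
  then have z: "(\<lambda>n. gg (2^(n+N) * (of_int J / 2^N)) / 2^(n+N)) = (\<lambda>n. 0::real)"
    by (intro ext) (simp only: div_0)
  show ?thesis by (simp only: tail_def z suminf_zero)
qed

lemma term_interval:
  assumes J: "J = \<lfloor>2^N * x\<rfloor>" and m: "m < N"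
    and u: "of_int J / 2^N \<le> u" "u \<le> (of_int J + 1) / 2^N"
  shows "gg (2^m * u) = (if bdigit x (Suc m) = 0 then 2^m * u - of_int \<lfloor>2^(Suc m) * x\<rfloor> / 2
      else (of_int \<lfloor>2^(Suc m) * x\<rfloor> + 1) / 2 - 2^m * u)"
proof -
  define j where "j = \<lfloor>(2::real)^(Suc m) * x\<rfloor>"
  obtain d where N: "N = Suc m + d" using m by (metis less_iff_Suc_add add_Suc)
  have a: "2^d * j \<le> J" using floor_pow_le[of d "Suc m" x] unfolding J j_def N by simp
  have b: "J < 2^d * (j + 1)" using floor_pow_lt[of "Suc m" d x] unfolding J j_def N by simp
  have a': "real_of_int (2^d) * of_int j \<le> of_int J" using a by (metis of_int_le_iff of_int_mult)
  have b': "of_int J + 1 \<le> real_of_int (2^d) * (of_int j + 1)"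
    using b by (metis (mono_tags, opaque_lifting) of_int_1 of_int_add of_int_le_iff of_int_mult zless_imp_add1_zle)
  have p: "(2::real)^m / 2^N = 1 / (2 * 2^d)" unfolding N by (simp add: power_add)
  have "of_int j / 2 \<le> 2^m * u"
  proof -
    have "2^m * u \<ge> 2^m * (of_int J / 2^N)" using u by (intro mult_left_mono) auto
    moreover have "(2::real)^m * (of_int J / 2^N) = of_int J / (2 * 2^d)" using p by (simp add: field_simps)
    moreover have "of_int J / (2 * 2^d) \<ge> (of_int j / 2::real)" using a' by (simp add: field_simps)
    ultimately show ?thesis by linarith
  qed
  moreover have "2^m * u \<le> (of_int j + 1) / 2"
  proof -
    have "2^m * u \<le> 2^m * ((of_int J + 1) / 2^N)" using u by (intro mult_left_mono) auto
    moreover have "(2::real)^m * ((of_int J + 1) / 2^N) = (of_int J + 1) / (2 * 2^d)" using p by (simp add: field_simps)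
    moreover have "(of_int J + 1) / (2 * 2^d) \<le> ((of_int j + 1) / 2::real)" using b' by (simp add: field_simps)
    ultimately show ?thesis by linarith
  qed
  ultimately have g: "gg (2^m * u) = (if even j then 2^m * u - of_int j / 2 else (of_int j + 1) / 2 - 2^m * u)"
    by (rule gg_lin)
  have "j mod 2 = 0 \<or> j mod 2 = 1" by presburger
  then have "bdigit x (Suc m) = 0 \<longleftrightarrow> even j" unfolding bdigit_def j_def[symmetric]
    by (auto simp: even_iff_mod_2_eq_zero)
  then show ?thesis using g unfolding j_def by simp
qed

lemma term_diff:
  assumes J: "J = \<lfloor>2^N * x\<rfloor>" and m: "m < N"
    and u: "of_int J / 2^N \<le> u" "u \<le> (of_int J + 1) / 2^N"
    and v: "of_int J / 2^N \<le> v" "v \<le> (of_int J + 1) / 2^N"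
  shows "gg (2^m * u) / 2^m - gg (2^m * v) / 2^m = (1 - 2 * real (bdigit x (Suc m))) * (u - v)"
  using term_interval[OF J m u] term_interval[OF J m v] bdigit_cases[of x "Suc m"]
  by (auto simp: field_simps)

lemma GG_interval:
  assumes J: "J = \<lfloor>2^N * x\<rfloor>"
    and u: "of_int J / 2^N \<le> u" "u \<le> (of_int J + 1) / 2^N"
    and v: "of_int J / 2^N \<le> v" "v \<le> (of_int J + 1) / 2^N"
  shows "GG u - GG v = DD N x * (u - v) + tail N u - tail N v"
proof -
  have "(\<Sum>m<N. gg (2^m * u) / 2^m) - (\<Sum>m<N. gg (2^m * v) / 2^m)
      = (\<Sum>m<N. (1 - 2 * real (bdigit x (Suc m))) * (u - v))"
    by (subst sum_subtractf[symmetric]) (intro sum.cong refl term_diff[OF J _ u v]; simp)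
  also have "\<dots> = DD N x * (u - v)" unfolding DD_def by (simp add: sum_distrib_right)
  finally show ?thesis using GG_split[of u N] GG_split[of v N] by simp
qed

lemma DD_bound: "\<bar>DD N x\<bar> \<le> real N"
proof -
  have "\<bar>DD N x\<bar> \<le> (\<Sum>m<N. \<bar>1 - 2 * real (bdigit x (Suc m))\<bar>)" unfolding DD_def by (rule sum_abs)
  also have "\<dots> \<le> (\<Sum>m<N. 1)"
  proof (intro sum_mono)
    fix m show "\<bar>1 - 2 * real (bdigit x (Suc m))\<bar> \<le> 1" using bdigit_cases[of x "Suc m"] by auto
  qed
  finally show ?thesis by simp
qed

lemma GG_sym: "GG (1 - u) = GG u"
proof -
  have "gg (2^n * (1 - u)) = gg (2^n * u)" for n
  proof -
    have "(2::real)^n * (1 - u) = of_int (2^n) - 2^n * u" by (simp add: algebra_simps)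
    then show ?thesis using gg_int_minus[of "2^n" "2^n*u"] by simp
  qed
  then show ?thesis unfolding GG_def by simp
qed

lemma phi_gg: "0 \<le> z \<Longrightarrow> z \<le> 1 \<Longrightarrow> phi z = 2 * gg z"
  using gg_lin[of 0 z] gg_lin[of 1 z] unfolding phi_def by auto

lemma gg_double: "gg (2 * gg y) = gg (2 * y)"
proof -
  have "2 * gg y = \<bar>2 * (y - of_int (round y))\<bar>" unfolding gg_def by (subst abs_mult) simp
  also have "\<dots> = \<bar>2 * y + of_int (- 2 * round y)\<bar>" by (simp add: algebra_simps)
  finally have "2 * gg y = \<bar>2 * y + of_int (- 2 * round y)\<bar>" .
  then show ?thesis by (metis abs_if gg_neg gg_shift)
qed

lemma phi_iter: "0 \<le> x \<Longrightarrow> x \<le> 1 \<Longrightarrow> (phi ^^ Suc n) x = 2 * gg (2^n * x)"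
proof (induction n)
  case 0 then show ?case by (simp add: phi_gg)
next
  case (Suc n)
  have "(phi ^^ Suc (Suc n)) x = phi ((phi ^^ Suc n) x)" by simp
  also have "\<dots> = phi (2 * gg (2^n * x))" using Suc by simp
  also have "\<dots> = 2 * gg (2 * gg (2^n * x))" using gg_nonneg[of "2^n*x"] gg_half[of "2^n*x"] by (intro phi_gg) linarith+
  also have "\<dots> = 2 * gg (2^Suc n * x)" by (simp add: gg_double mult.assoc)
  finally show ?case .
qed

lemma takagi_GG: "0 \<le> x \<Longrightarrow> x \<le> 1 \<Longrightarrow> takagi x = GG x"
proof -
  assume x: "0 \<le> x" "x \<le> 1"
  have "(1/2)^Suc n * (phi ^^ Suc n) x = gg (2^n * x) / 2^n" for n
    using phi_iter[OF x, of n] by (simp add: power_one_over)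
  then show ?thesis unfolding takagi_def GG_def by presburger
qed



definition Lg :: "real \<Rightarrow> real" where "Lg h = log 2 (1 / \<bar>h\<bar>)"
definition QG :: "real \<Rightarrow> real \<Rightarrow> real" where "QG x h = (GG (x + h) - GG x) / (h * Lg h)"

lemma Lg_neg: "Lg (-h) = Lg h" unfolding Lg_def by simp

lemma Lg_pos: "h \<noteq> 0 \<Longrightarrow> \<bar>h\<bar> < 1 \<Longrightarrow> 0 < Lg h"
  unfolding Lg_def by simp

lemma Lg_ge: assumes "h \<noteq> 0" "\<bar>h\<bar> \<le> (1/2)^N" shows "real N \<le> Lg h"
proof -
  have "(2::real)^N \<le> 1 / \<bar>h\<bar>" using assms by (simp add: field_simps power_one_over)
  then have "log 2 (2^N) \<le> log 2 (1 / \<bar>h\<bar>)" using assms by (subst log_le_cancel_iff) auto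
  then show ?thesis unfolding Lg_def by (simp add: log_nat_power)
qed

lemma abs_powr_Lg: "h \<noteq> 0 \<Longrightarrow> \<bar>h\<bar> = 2 powr (- Lg h)"
  unfolding Lg_def by (simp add: powr_minus powr_log_cancel)

lemma xlogx:
  assumes "0 < t" "t \<le> (1/2)^N"
  shows "t * Lg t \<le> t * real N + (1/2)^N / ln 2"
proof -
  define a where "a = (1/2::real)^N"
  have a: "0 < a" "t \<le> a" using assms unfolding a_def by auto
  have "1/t = (1/a)*(a/t)" using a assms by (simp add: field_simps)
  then have "Lg t = log 2 ((1/a)*(a/t))" unfolding Lg_def using assms by simp
  also have "\<dots> = log 2 (1/a) + log 2 (a/t)" using a assms by (subst log_mult) auto
  finally have "Lg t = log 2 (1/a) + log 2 (a/t)" .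
  moreover have "log 2 (1/a) = real N" unfolding a_def by (simp add: power_one_over log_nat_power)
  moreover have "log 2 (a/t) \<le> (a/t) / ln 2"
  proof -
    have "ln (a/t) \<le> a/t - 1" using a assms by (intro ln_le_minus_one) auto
    then have "ln (a/t) \<le> a/t" by linarith
    then have "ln (a/t) / ln 2 \<le> (a/t) / ln 2" by (intro divide_right_mono) auto
    then show ?thesis unfolding log_def .
  qed
  ultimately have "Lg t \<le> real N + (a/t) / ln 2" by linarith
  then have "t * Lg t \<le> t * (real N + (a/t) / ln 2)" using assms by (intro mult_left_mono) auto
  also have "\<dots> = t * real N + a / ln 2" using assms by (simp add: field_simps)
  finally show ?thesis unfolding a_def .
qed

lemma lim_bound:
  assumes lim: "(QG x \<longlongrightarrow> c) (at 0)" and e: "e > 0"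
  shows "\<exists>d>0. \<forall>h. h \<noteq> 0 \<and> \<bar>h\<bar> < d \<longrightarrow> \<bar>GG (x+h) - GG x - c*h*Lg h\<bar> \<le> e*\<bar>h\<bar>*Lg h"
proof -
  obtain s where s: "s > 0" "\<forall>h. h \<noteq> 0 \<and> norm (h - 0) < s \<longrightarrow> norm (QG x h - c) < e"
    using lim e unfolding LIM_eq by blast
  show ?thesis
  proof (intro exI[of _ "min s 1"] conjI allI impI)
    show "0 < min s 1" using s by simp
    fix h assume h: "h \<noteq> 0 \<and> \<bar>h\<bar> < min s 1"
    then have q: "\<bar>QG x h - c\<bar> < e" using s by simp
    have L: "0 < Lg h" using h by (intro Lg_pos) auto
    have hl: "\<bar>h * Lg h\<bar> = \<bar>h\<bar> * Lg h" using L by (simp add: abs_mult)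
    have "GG (x+h) - GG x - c*h*Lg h = (QG x h - c) * (h * Lg h)"
      unfolding QG_def using h L by (simp add: field_simps)
    then have "\<bar>GG (x+h) - GG x - c*h*Lg h\<bar> = \<bar>QG x h - c\<bar> * (\<bar>h\<bar> * Lg h)"
      by (simp add: abs_mult hl abs_of_pos[OF L])
    also have "\<dots> \<le> e * (\<bar>h\<bar> * Lg h)" using q L h by (intro mult_right_mono) auto
    finally show "\<bar>GG (x+h) - GG x - c*h*Lg h\<bar> \<le> e*\<bar>h\<bar>*Lg h" by simp
  qed
qed



lemma frac_bounds: "\<not> dyadic x \<Longrightarrow> 0 < 2^N * x - of_int \<lfloor>(2::real)^N * x\<rfloor> \<and> 2^N * x - of_int \<lfloor>(2::real)^N * x\<rfloor> < 1"
  using nondyadic_frac_pos[of x N] by linarith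

lemma Dlim:
  assumes nd: "\<not> dyadic x" and lim: "(QG x \<longlongrightarrow> c) (at 0)"
  shows "(\<lambda>N. DD N x / real N) \<longlonglongrightarrow> c"
proof (rule LIMSEQ_I)
  fix r :: real assume r: "0 < r"
  define K where "K = 1 / ln (2::real)"
  have K: "0 < K" unfolding K_def by simp
  define e where "e = r / 4"
  have e: "0 < e" using r unfolding e_def by simp
  obtain d where d: "d > 0" and bd: "\<forall>h. h \<noteq> 0 \<and> \<bar>h\<bar> < d \<longrightarrow> \<bar>GG (x+h) - GG x - c*h*Lg h\<bar> \<le> e*\<bar>h\<bar>*Lg h"
    using lim_bound[OF lim e] by blast
  obtain N1 where N1: "(1/2::real)^N1 < d" using real_arch_pow_inv[OF d, of "1/2"] by auto
  obtain N2 where N2: "(2*K*e + 2*K*\<bar>c\<bar>) * 4 / r < real N2" using reals_Archimedean2 by blast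
  show "\<exists>no. \<forall>N\<ge>no. norm (DD N x / real N - c) < r"
  proof (intro exI[of _ "max (max N1 N2) 1"] allI impI)
    fix N assume N: "max (max N1 N2) 1 \<le> N"
    define J where "J = \<lfloor>(2::real)^N * x\<rfloor>"
    define a where "a = (1/2::real)^N"
    have a: "0 < a" unfolding a_def by simp
    have ad: "a < d"
    proof -
      have "a \<le> (1/2)^N1" unfolding a_def using N by (intro power_decreasing) auto
      then show ?thesis using N1 by simp
    qed
    have fr: "0 < 2^N * x - of_int J" "2^N * x - of_int J < 1" using frac_bounds[OF nd, of N] unfolding J_def by auto
    define hr where "hr = (of_int J + 1) / 2^N - x"
    define hl where "hl = of_int J / 2^N - x"
    have p2: "(0::real) < 2^N" by simp
    have hr: "0 < hr" "hr \<le> a"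
    proof -
      have "x < (of_int J + 1) / 2^N" using fr p2 by (simp add: field_simps)
      then show "0 < hr" unfolding hr_def by simp
      have "of_int J / 2^N < x" using fr p2 by (simp add: field_simps)
      then show "hr \<le> a" unfolding hr_def a_def by (simp add: field_simps power_one_over)
    qed
    have hl: "0 < - hl" "- hl \<le> a"
    proof -
      have "of_int J / 2^N < x" using fr p2 by (simp add: field_simps)
      then show "0 < - hl" unfolding hl_def by simp
      have "- hl = (2^N*x - of_int J) * a" unfolding hl_def a_def by (simp add: field_simps power_one_over)
      also have "\<dots> \<le> 1 * a" using fr a by (intro mult_right_mono) auto
      finally show "- hl \<le> a" by simp
    qed
    have sum_h: "hr + (- hl) = a" unfolding hr_def hl_def a_def by (simp add: field_simps power_one_over)
    have GGd: "GG (x + hr) - GG (x + hl) = DD N x * a"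
    proof -
      have mono: "of_int J / 2^N \<le> (of_int J + 1) / (2^N::real)" by (intro divide_right_mono) auto
      have u1: "of_int J / 2^N \<le> x + hr" "x + hr \<le> (of_int J + 1) / 2^N" using hr sum_h hl mono unfolding hr_def by auto
      have u2: "of_int J / 2^N \<le> x + hl" "x + hl \<le> (of_int J + 1) / 2^N" using hr sum_h hl mono unfolding hl_def by auto
      have "GG (x + hr) - GG (x + hl) = DD N x * ((x + hr) - (x + hl)) + tail N (x + hr) - tail N (x + hl)"
        by (rule GG_interval[OF J_def u1 u2])
      moreover have "tail N (x + hr) = 0"
        using tail_dyadic[of N "J+1"] unfolding hr_def by simp
      moreover have "tail N (x + hl) = 0"
        using tail_dyadic[of N J] unfolding hl_def by simp
      ultimately show ?thesis using sum_h by simp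
    qed
    define Lr where "Lr = Lg hr"
    define Ll where "Ll = Lg hl"
    have b1: "\<bar>GG (x+hr) - GG x - c*hr*Lr\<bar> \<le> e*hr*Lr" using bd[rule_format, of hr] hr ad unfolding Lr_def by auto
    have b2: "\<bar>GG (x+hl) - GG x - c*hl*Ll\<bar> \<le> e*(-hl)*Ll" using bd[rule_format, of hl] hl ad unfolding Ll_def by auto
    have Lr1: "real N \<le> Lr" unfolding Lr_def using hr by (intro Lg_ge) (auto simp: a_def)
    have Ll1: "real N \<le> Ll" unfolding Ll_def using hl by (intro Lg_ge) (auto simp: a_def)
    have Lr2: "hr * Lr \<le> hr * real N + a * K"
      using xlogx[of hr N] hr unfolding Lr_def a_def K_def by simp
    have Ll2: "(-hl) * Ll \<le> (-hl) * real N + a * K"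
      using xlogx[of "-hl" N] hl Lg_neg[of hl] unfolding Ll_def a_def K_def by simp
    define S where "S = hr * Lr + (-hl) * Ll"
    have S1: "real N * a \<le> S"
    proof -
      have "hr * real N \<le> hr * Lr" using Lr1 hr by (intro mult_left_mono) auto
      moreover have "(-hl) * real N \<le> (-hl) * Ll" using Ll1 hl by (intro mult_left_mono) auto
      ultimately show ?thesis unfolding S_def using sum_h by (simp add: algebra_simps)
    qed
    have S2: "S \<le> real N * a + 2 * a * K"
    proof -
      have "S \<le> (hr + (-hl)) * real N + 2 * a * K" unfolding S_def using Lr2 Ll2 by (simp add: algebra_simps)
      then show ?thesis using sum_h by (simp add: algebra_simps)
    qed
    have m1: "\<bar>DD N x * a - c * S\<bar> \<le> e * S"
    proof -
      have "DD N x * a - c * S = (GG (x+hr) - GG x - c*hr*Lr) - (GG (x+hl) - GG x - c*hl*Ll)"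
        using GGd unfolding S_def by (simp add: algebra_simps)
      then have "\<bar>DD N x * a - c * S\<bar> \<le> e*hr*Lr + e*(-hl)*Ll" using b1 b2 by linarith
      then show ?thesis unfolding S_def by (simp add: algebra_simps)
    qed
    have m2: "\<bar>c * S - c * (real N * a)\<bar> \<le> \<bar>c\<bar> * (2 * a * K)"
    proof -
      have "\<bar>c * S - c * (real N * a)\<bar> = \<bar>c\<bar> * \<bar>S - real N * a\<bar>" by (simp add: abs_mult[symmetric] algebra_simps)
      also have "\<dots> \<le> \<bar>c\<bar> * (2 * a * K)" using S1 S2 by (intro mult_left_mono) auto
      finally show ?thesis .
    qed
    have m3: "e * S \<le> e * (real N * a + 2 * a * K)" using S2 e by (intro mult_left_mono) auto
    have "\<bar>DD N x * a - c * (real N * a)\<bar> \<le> e * (real N * a + 2 * a * K) + \<bar>c\<bar> * (2 * a * K)"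
      using m1 m2 m3 by linarith
    moreover have "\<bar>DD N x * a - c * (real N * a)\<bar> = a * \<bar>DD N x - c * real N\<bar>"
    proof -
      have "DD N x * a - c * (real N * a) = a * (DD N x - c * real N)" by (simp add: algebra_simps)
      then show ?thesis using a by (simp add: abs_mult)
    qed
    ultimately have "a * \<bar>DD N x - c * real N\<bar> \<le> a * (e * real N + 2 * e * K + 2 * K * \<bar>c\<bar>)"
      by (simp add: algebra_simps)
    then have m4: "\<bar>DD N x - c * real N\<bar> \<le> e * real N + 2 * e * K + 2 * K * \<bar>c\<bar>"
      using a by simp
    have Npos: "0 < real N" using N by simp
    have "\<bar>DD N x / real N - c\<bar> = \<bar>DD N x - c * real N\<bar> / real N" using Npos
      by (simp add: field_simps abs_divide)
    also have "\<dots> \<le> (e * real N + 2 * e * K + 2 * K * \<bar>c\<bar>) / real N"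
      using m4 Npos by (intro divide_right_mono) auto
    also have "\<dots> = e + (2 * K * e + 2 * K * \<bar>c\<bar>) / real N" using Npos by (simp add: field_simps)
    also have "(2 * K * e + 2 * K * \<bar>c\<bar>) / real N \<le> r / 4"
    proof -
      have "real N2 \<le> real N" using N by simp
      then have "(2*K*e + 2*K*\<bar>c\<bar>) * 4 / r < real N" using N2 by linarith
      then have "(2*K*e + 2*K*\<bar>c\<bar>) * 4 < real N * r" using r by (simp add: field_simps)
      then show ?thesis using Npos r by (simp add: field_simps)
    qed
    finally show "norm (DD N x / real N - c) < r" unfolding e_def using r by simp
  qed
qed



lemma powr_shift: "(2::real) powr (- (real N + y)) = 2 powr (- y) / 2^N"
proof -
  have "(2::real) powr (- (real N + y)) = 2 powr (- y) * 2 powr (- real N)" by (simp add: powr_add[symmetric] add.commute)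
  moreover have "(2::real) powr (- real N) = 1 / 2^N" by (simp add: powr_minus powr_realpow divide_inverse)
  ultimately show ?thesis by simp
qed

lemma IFcore:
  assumes Dl: "(\<lambda>N. DD N x / real N) \<longlonglongrightarrow> c" and c1: "\<bar>c\<bar> \<le> 1"
    and run: "\<And>\<epsilon>. \<epsilon> > 0 \<Longrightarrow> \<exists>N0. \<forall>N\<ge>N0.
        2 powr (-(\<epsilon>*real N+1)) \<le> 2^N * x - of_int \<lfloor>(2::real)^N * x\<rfloor> \<and>
        2 powr (-(\<epsilon>*real N+1)) \<le> 1 - (2^N * x - of_int \<lfloor>(2::real)^N * x\<rfloor>)"
  shows "(QG x \<longlongrightarrow> c) (at 0)"
  unfolding LIM_eq
proof (intro allI impI)
  fix r :: real assume r: "0 < r"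
  define \<epsilon> where "\<epsilon> = r / 8"
  have \<epsilon>: "0 < \<epsilon>" using r unfolding \<epsilon>_def by simp
  obtain N0 where N0: "\<forall>N\<ge>N0. 2 powr (-(\<epsilon>*real N+1)) \<le> 2^N * x - of_int \<lfloor>(2::real)^N * x\<rfloor> \<and>
        2 powr (-(\<epsilon>*real N+1)) \<le> 1 - (2^N * x - of_int \<lfloor>(2::real)^N * x\<rfloor>)"
    using run[OF \<epsilon>] by blast
  obtain N1 where N1: "\<forall>N\<ge>N1. norm (DD N x / real N - c) < \<epsilon>" using LIMSEQ_D[OF Dl \<epsilon>] by blast
  define M0 where "M0 = max N0 N1 + 1"
  define Lmin where "Lmin = max ((real M0 + 1) * (1 + \<epsilon>) + 1) (16 / r)"
  show "\<exists>s>0. \<forall>h. h \<noteq> 0 \<and> norm (h - 0) < s \<longrightarrow> norm (QG x h - c) < r"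
  proof (intro exI[of _ "2 powr (- Lmin)"] conjI allI impI)
    show "0 < (2::real) powr (- Lmin)" by simp
    fix h :: real assume h: "h \<noteq> 0 \<and> norm (h - 0) < 2 powr (- Lmin)"
    define L where "L = Lg h"
    have habs: "\<bar>h\<bar> = 2 powr (- L)" unfolding L_def using h by (intro abs_powr_Lg) auto
    have LL: "Lmin < L" using h habs by simp
    have L16: "16 / r < L" using LL unfolding Lmin_def by simp
    have LM: "(real M0 + 1) * (1 + \<epsilon>) + 1 < L" using LL unfolding Lmin_def by simp
    have Lpos: "0 < L" using L16 r by (smt (verit) divide_pos_pos)
    define N where "N = nat \<lfloor>(L - 1) / (1 + \<epsilon>)\<rfloor>"
    have q0: "real M0 + 1 < (L - 1) / (1 + \<epsilon>)" using LM \<epsilon> by (simp add: field_simps)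
    have Nle: "real N \<le> (L - 1) / (1 + \<epsilon>)" unfolding N_def using q0
      by (smt (verit) of_nat_0_le_iff floor_le_iff of_int_floor_le of_nat_nat zero_le_floor)
    have Ngt: "(L - 1) / (1 + \<epsilon>) - 1 < real N" unfolding N_def using q0
      by (smt (verit) of_nat_0_le_iff floor_le_iff of_int_floor_le of_nat_nat zero_le_floor real_of_int_floor_add_one_gt)
    have NM: "M0 \<le> N" using Ngt q0 by linarith
    have NN0: "N0 \<le> N" and NN1: "N1 \<le> N" and N1': "1 \<le> N" using NM unfolding M0_def by auto
    have Nsum: "real N + \<epsilon> * real N + 1 \<le> L"
    proof -
      have "real N * (1 + \<epsilon>) \<le> L - 1" using Nle \<epsilon> by (simp add: field_simps)
      then show ?thesis by (simp add: algebra_simps)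
    qed
    have LN: "L - real N \<le> \<epsilon> * L + 2"
    proof -
      have "L - real N \<le> L - ((L - 1) / (1 + \<epsilon>) - 1)" using Ngt by linarith
      also have "\<dots> = (\<epsilon> * L + 1) / (1 + \<epsilon>) + 1" using \<epsilon> by (simp add: field_simps)
      finally have a1: "L - real N \<le> (\<epsilon> * L + 1) / (1 + \<epsilon>) + 1" .
      have "(\<epsilon> * L + 1) / (1 + \<epsilon>) \<le> \<epsilon> * L + 1" using \<epsilon> Lpos
        by (simp add: field_simps)
      then show ?thesis using a1 by linarith
    qed
    have NL: "real N \<le> L" using Nsum \<epsilon> by (smt (verit) mult_nonneg_nonneg of_nat_0_le_iff)
    define J where "J = \<lfloor>(2::real)^N * x\<rfloor>"
    define fr where "fr = 2^N * x - of_int J"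
    have runN: "2 powr (-(\<epsilon>*real N+1)) \<le> fr" "2 powr (-(\<epsilon>*real N+1)) \<le> 1 - fr"
      using N0 NN0 unfolding fr_def J_def by auto
    have hsmall: "\<bar>h\<bar> \<le> 2 powr (-(\<epsilon>*real N+1)) / 2^N"
    proof -
      have "\<bar>h\<bar> \<le> 2 powr (- (real N + (\<epsilon> * real N + 1)))" unfolding habs
        by (rule powr_mono) (use Nsum in auto)
      then show ?thesis by (simp only: powr_shift)
    qed
    have p2: "(0::real) < 2^N" by simp
    have "2 powr (-(\<epsilon>*real N+1)) / 2^N \<le> fr / 2^N" by (rule divide_right_mono) (use runN in auto)
    then have hfr1: "\<bar>h\<bar> \<le> fr / 2^N" using hsmall by linarith
    have "2 powr (-(\<epsilon>*real N+1)) / 2^N \<le> (1 - fr) / 2^N" by (rule divide_right_mono) (use runN in auto)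
    then have hfr2: "\<bar>h\<bar> \<le> (1 - fr) / 2^N" using hsmall by linarith
    have xJ: "of_int J / 2^N = x - fr / 2^N" unfolding fr_def by (simp add: field_simps)
    have xJ1: "(of_int J + 1) / 2^N = x + (1 - fr) / 2^N" unfolding fr_def by (simp add: field_simps)
    have fr01: "0 \<le> fr" "fr \<le> 1" using runN powr_ge_zero[of 2 "-(\<epsilon>*real N+1)"] by linarith+
    have u: "of_int J / 2^N \<le> x + h" "x + h \<le> (of_int J + 1) / 2^N" using hfr1 hfr2 xJ xJ1 by linarith+
    have v: "of_int J / 2^N \<le> x" "x \<le> (of_int J + 1) / 2^N" using xJ xJ1 fr01 p2 by (simp_all add: divide_nonneg_pos)
    have Gd: "GG (x + h) - GG x = DD N x * h + (tail N (x + h) - tail N x)"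
      using GG_interval[OF J_def u v] by simp
    define M where "M = nat \<lceil>L\<rceil>"
    have LMc: "L \<le> real M" "real M \<le> L + 1" unfolding M_def using Lpos by linarith+
    have NMc: "N \<le> M" using NL LMc by linarith
    have E1: "\<bar>tail N (x + h) - tail N x\<bar> \<le> real (M - N) * \<bar>h\<bar> + (1/2)^(N + (M - N))"
      using tail_diff[of N "x+h" x "M - N"] by simp
    have E2: "(1/2::real)^(N + (M - N)) \<le> \<bar>h\<bar>"
    proof -
      have "N + (M - N) = M" using NMc by simp
      then have "(1/2::real)^(N + (M - N)) = (1/2)^M" by simp
      also have "\<dots> = 2 powr (- real M)" by (simp add: powr_minus powr_realpow power_one_over inverse_eq_divide)
      also have "\<dots> \<le> 2 powr (- L)" by (rule powr_mono) (use LMc in auto)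
      finally show ?thesis using habs by simp
    qed
    have E3: "real (M - N) * \<bar>h\<bar> \<le> (\<epsilon> * L + 3) * \<bar>h\<bar>"
    proof (rule mult_right_mono)
      have "real (M - N) = real M - real N" using NMc by simp
      then show "real (M - N) \<le> \<epsilon> * L + 3" using LMc LN by linarith
    qed simp
    define E where "E = tail N (x + h) - tail N x"
    have Eb: "\<bar>E\<bar> \<le> (\<epsilon> * L + 4) * \<bar>h\<bar>"
    proof -
      have "(\<epsilon> * L + 4) * \<bar>h\<bar> = (\<epsilon> * L + 3) * \<bar>h\<bar> + \<bar>h\<bar>" by (simp add: algebra_simps)
      then show ?thesis using E1 E2 E3 unfolding E_def by linarith
    qed
    have Qeq: "QG x h - c = (DD N x - c * L) / L + E / (h * L)"
    proof -
      have "QG x h = (DD N x * h + E) / (h * L)" unfolding QG_def L_def[symmetric] E_def using Gd by simp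
      also have "\<dots> = DD N x * h / (h * L) + E / (h * L)" by (rule add_divide_distrib)
      also have "DD N x * h / (h * L) = DD N x / L" using h by simp
      finally have "QG x h = DD N x / L + E / (h * L)" .
      moreover have "c = c * L / L" using Lpos by simp
      ultimately show ?thesis by (metis diff_divide_distrib add_diff_eq diff_add_eq)
    qed
    have D1: "\<bar>DD N x - c * real N\<bar> \<le> \<epsilon> * real N"
    proof -
      have "\<bar>DD N x / real N - c\<bar> < \<epsilon>" using N1 NN1 by auto
      moreover have "DD N x / real N - c = (DD N x - c * real N) / real N" using N1' by (simp add: field_simps)
      ultimately have "\<bar>DD N x - c * real N\<bar> / real N < \<epsilon>" by (simp add: abs_divide)
      then show ?thesis using N1' by (simp add: field_simps)
    qed
    have D2: "\<bar>c * real N - c * L\<bar> \<le> \<epsilon> * L + 2"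
    proof -
      have "c * real N - c * L = c * (real N - L)" by (simp add: algebra_simps)
      then have "\<bar>c * real N - c * L\<bar> = \<bar>c\<bar> * \<bar>real N - L\<bar>" by (simp add: abs_mult)
      then have "\<bar>c * real N - c * L\<bar> = \<bar>c\<bar> * (L - real N)" using NL by simp
      also have "\<dots> \<le> 1 * (L - real N)" using c1 NL by (intro mult_right_mono) auto
      finally show ?thesis using LN by simp
    qed
    have D3: "\<epsilon> * real N \<le> \<epsilon> * L" using NL \<epsilon> by (intro mult_left_mono) auto
    have T1: "\<bar>(DD N x - c * L) / L\<bar> \<le> (2 * \<epsilon> * L + 2) / L"
    proof -
      have "\<bar>DD N x - c * L\<bar> \<le> \<bar>DD N x - c * real N\<bar> + \<bar>c * real N - c * L\<bar>"
        using abs_triangle_ineq[of "DD N x - c * real N" "c * real N - c * L"] by simp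
      then have "\<bar>DD N x - c * L\<bar> \<le> 2 * \<epsilon> * L + 2" using D1 D2 D3 by linarith
      then have "\<bar>DD N x - c * L\<bar> / L \<le> (2 * \<epsilon> * L + 2) / L" using Lpos by (intro divide_right_mono) auto
      then show ?thesis using Lpos by (simp add: abs_divide)
    qed
    have T2: "\<bar>E / (h * L)\<bar> \<le> (\<epsilon> * L + 4) / L"
    proof -
      have "\<bar>E / (h * L)\<bar> = \<bar>E\<bar> / (\<bar>h\<bar> * L)" using Lpos by (simp add: abs_divide abs_mult)
      also have "\<dots> \<le> ((\<epsilon> * L + 4) * \<bar>h\<bar>) / (\<bar>h\<bar> * L)" using Eb h Lpos by (intro divide_right_mono) auto
      also have "\<dots> = (\<epsilon> * L + 4) / L" using h by simp
      finally show ?thesis .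
    qed
    have "\<bar>QG x h - c\<bar> \<le> (2 * \<epsilon> * L + 2) / L + (\<epsilon> * L + 4) / L" using Qeq T1 T2 abs_triangle_ineq[of "(DD N x - c * L) / L" "E / (h * L)"] by (simp add: add_divide_distrib)
    also have "\<dots> = 3 * \<epsilon> + 6 / L" using Lpos by (simp add: field_simps)
    finally have fin: "\<bar>QG x h - c\<bar> \<le> 3 * \<epsilon> + 6 / L" .
    have "6 / L < 3 * r / 8"
    proof -
      have "16 < L * r" using L16 r by (simp add: field_simps)
      then show ?thesis using Lpos by (simp add: field_simps)
    qed
    then have "\<bar>QG x h - c\<bar> < 3 * \<epsilon> + 3 * r / 8" using fin by linarith
    then show "norm (QG x h - c) < r" unfolding \<epsilon>_def using r by simp
  qed
qed



definition OS :: "real \<Rightarrow> bool" where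
  "OS y \<longleftrightarrow> (\<forall>\<epsilon>>0. \<exists>N0. \<forall>N\<ge>N0. 2 powr (-(\<epsilon>*real N+1)) \<le> 2^N * y - of_int \<lfloor>(2::real)^N * y\<rfloor>)"

lemma OS_from_digits:
  assumes "\<And>\<epsilon>. \<epsilon> > 0 \<Longrightarrow> \<exists>N0. \<forall>N\<ge>N0. \<exists>j. 1 \<le> j \<and> real j \<le> \<epsilon> * real N + 1 \<and> bdigit y (N+j) = 1"
  shows "OS y"
  unfolding OS_def
proof (intro allI impI)
  fix \<epsilon> :: real assume "\<epsilon> > 0"
  then obtain N0 where N0: "\<forall>N\<ge>N0. \<exists>j. 1 \<le> j \<and> real j \<le> \<epsilon> * real N + 1 \<and> bdigit y (N+j) = 1"
    using assms by blast
  show "\<exists>N0. \<forall>N\<ge>N0. 2 powr (-(\<epsilon>*real N+1)) \<le> 2^N * y - of_int \<lfloor>(2::real)^N * y\<rfloor>"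
  proof (intro exI[of _ N0] allI impI)
    fix N assume "N0 \<le> N"
    then obtain j where j: "1 \<le> j" "real j \<le> \<epsilon> * real N + 1" "bdigit y (N+j) = 1" using N0 by blast
    have "2 powr (-(\<epsilon>*real N+1)) \<le> 2 powr (- real j)" by (rule powr_mono) (use j in auto)
    also have "\<dots> = (1/2)^j" by (simp add: powr_minus powr_realpow power_one_over inverse_eq_divide)
    also have "\<dots> \<le> 2^N * y - of_int \<lfloor>(2::real)^N * y\<rfloor>" by (rule frac_ge_digit[OF j(1) j(3)])
    finally show "2 powr (-(\<epsilon>*real N+1)) \<le> 2^N * y - of_int \<lfloor>(2::real)^N * y\<rfloor>" .
  qed
qed

definition Ssum :: "real \<Rightarrow> nat \<Rightarrow> real" where "Ssum y n = (\<Sum>k=1..n. real (bdigit y k))"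

lemma avg_Ssum: "1 \<le> n \<Longrightarrow> digit_avg y n = Ssum y n / real n"
  unfolding digit_avg_def Ssum_def by simp

lemma Ssum_zero_run:
  assumes "\<And>i. 1 \<le> i \<Longrightarrow> i \<le> r \<Longrightarrow> bdigit y (N+i) = 0"
  shows "Ssum y (N + r) = Ssum y N"
proof -
  have "Ssum y (N + r) = Ssum y N + (\<Sum>k=N+1..N+r. real (bdigit y k))"
    unfolding Ssum_def by (rule sum.ub_add_nat) simp
  moreover have "(\<Sum>k=N+1..N+r. real (bdigit y k)) = 0"
  proof (intro sum.neutral ballI)
    fix k assume k: "k \<in> {N+1..N+r}"
    then have "bdigit y (N + (k - N)) = 0" using assms[of "k - N"] by auto
    then show "real (bdigit y k) = 0" using k by simp
  qed
  ultimately show ?thesis by simp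
qed

lemma OS_pos:
  assumes conv: "convergent (digit_avg y)" and pos: "d1 y > 0"
  shows "OS y"
proof (rule OS_from_digits)
  fix \<epsilon> :: real assume \<epsilon>: "\<epsilon> > 0"
  define d where "d = d1 y"
  have lim: "digit_avg y \<longlonglongrightarrow> d" using conv unfolding d_def d1_def by (simp add: convergent_LIMSEQ_iff)
  define \<eta> where "\<eta> = min (d/2) (\<epsilon> * d / 4)"
  have \<eta>: "0 < \<eta>" using pos \<epsilon> unfolding \<eta>_def d_def by simp
  obtain N0 where N0: "\<forall>n\<ge>N0. norm (digit_avg y n - d) < \<eta>" using LIMSEQ_D[OF lim \<eta>] by blast
  show "\<exists>N0. \<forall>N\<ge>N0. \<exists>j. 1 \<le> j \<and> real j \<le> \<epsilon> * real N + 1 \<and> bdigit y (N+j) = 1"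
  proof (rule exI[of _ "max N0 1"], intro allI impI)
    fix N assume N: "max N0 1 \<le> N"
    define r where "r = nat \<lfloor>\<epsilon> * real N\<rfloor> + 1"
    have fl: "0 \<le> \<lfloor>\<epsilon> * real N\<rfloor>" using \<epsilon> by simp
    have rr: "real r = real_of_int \<lfloor>\<epsilon> * real N\<rfloor> + 1" unfolding r_def using fl by simp
    have r1: "real r \<le> \<epsilon> * real N + 1" using rr of_int_floor_le[of "\<epsilon> * real N"] by linarith
    have r2: "\<epsilon> * real N < real r" using rr real_of_int_floor_add_one_gt[of "\<epsilon> * real N"] by linarith
    show "\<exists>j. 1 \<le> j \<and> real j \<le> \<epsilon> * real N + 1 \<and> bdigit y (N+j) = 1"
    proof (rule ccontr)
      assume "\<not> ?thesis"
      then have z: "\<And>i. 1 \<le> i \<Longrightarrow> i \<le> r \<Longrightarrow> bdigit y (N+i) = 0"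
        using r1 bdigit_cases by (smt (verit, best) of_nat_le_iff)
      have eq: "Ssum y (N + r) = Ssum y N" by (rule Ssum_zero_run[OF z])
      have a1: "\<bar>Ssum y N / real N - d\<bar> < \<eta>" using N0 N avg_Ssum[of N y] by auto
      have a2: "\<bar>Ssum y (N+r) / real (N+r) - d\<bar> < \<eta>"
      proof -
        have "\<bar>digit_avg y (N+r) - d\<bar> < \<eta>" using N0 N by simp
        moreover have "digit_avg y (N+r) = Ssum y (N+r) / real (N+r)" using N by (intro avg_Ssum) simp
        ultimately show ?thesis by simp
      qed
      have Np: "0 < real N" using N by simp
      have Nrp: "0 < real (N + r)" using N by simp
      have b1: "Ssum y N < (d + \<eta>) * real N"
      proof -
        have "Ssum y N / real N < d + \<eta>" using a1 by linarith
        then show ?thesis using Np by (simp add: field_simps)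
      qed
      have b2: "(d - \<eta>) * real (N + r) < Ssum y (N + r)"
      proof -
        have "d - \<eta> < Ssum y (N+r) / real (N+r)" using a2 by linarith
        then show ?thesis using Nrp by (simp add: field_simps)
      qed
      have b3: "(d - \<eta>) * real r < 2 * \<eta> * real N" using b1 b2 eq by (simp add: algebra_simps)
      have dh: "d / 2 \<le> d - \<eta>" unfolding \<eta>_def by simp
      have "d/2 * (\<epsilon> * real N) \<le> (d - \<eta>) * real r"
      proof -
        have "d/2 * (\<epsilon> * real N) \<le> d/2 * real r" using r2 pos unfolding d_def by (intro mult_left_mono) auto
        also have "\<dots> \<le> (d - \<eta>) * real r" using dh by (intro mult_right_mono) auto
        finally show ?thesis .
      qed
      moreover have "2 * \<eta> * real N \<le> d/2 * (\<epsilon> * real N)"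
      proof -
        have "\<eta> \<le> \<epsilon> * d / 4" unfolding \<eta>_def by simp
        then have "2 * \<eta> \<le> d/2 * \<epsilon>" by (simp add: mult.commute)
        then show ?thesis using Np by (metis mult.assoc mult_right_mono less_imp_le)
      qed
      ultimately show False using b3 by linarith
    qed
  qed
qed



definition S1 :: "real \<Rightarrow> nat set" where "S1 y = {k. 1 \<le> k \<and> bdigit y k = 1}"

lemma apos_Suc: "apos y (Suc n) = enumerate (S1 y) n"
  unfolding apos_def S1_def by simp

lemma apos_pos: "1 \<le> n \<Longrightarrow> apos y n = enumerate (S1 y) (n - 1)"
  unfolding apos_def S1_def by simp

lemma S1_infinite: assumes "\<not> dyadic y" shows "infinite (S1 y)"
proof
  assume "finite (S1 y)"
  then obtain K where K: "S1 y \<subseteq> {..<K}" using finite_nat_bounded by blast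
  have z: "\<And>i. 1 \<le> i \<Longrightarrow> i \<le> j \<Longrightarrow> bdigit y (K+i) = 0" for j
  proof -
    fix i :: nat assume "1 \<le> i"
    then have "K + i \<notin> S1 y" using K by auto
    then show "bdigit y (K+i) = 0" using bdigit_cases[of y "K+i"] \<open>1 \<le> i\<close> unfolding S1_def by auto
  qed
  have fp: "0 < 2^K * y - of_int \<lfloor>(2::real)^K * y\<rfloor>" by (rule nondyadic_frac_pos[OF assms])
  obtain j where j: "(1/2::real)^j < 2^K * y - of_int \<lfloor>(2::real)^K * y\<rfloor>"
    using real_arch_pow_inv[OF fp, of "1/2"] by auto
  have "2^K * y - of_int \<lfloor>(2::real)^K * y\<rfloor> < (1/2::real)^j" by (rule frac_lt_zero_digits[OF z])
  then show False using j by simp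
qed

lemma OS_ratio:
  assumes nd: "\<not> dyadic y" and rat: "(\<lambda>n. real (apos y (Suc n)) / real (apos y n)) \<longlonglongrightarrow> 1"
  shows "OS y"
proof (rule OS_from_digits)
  fix \<epsilon> :: real assume \<epsilon>: "\<epsilon> > 0"
  define e where "e = enumerate (S1 y)"
  have inf: "infinite (S1 y)" by (rule S1_infinite[OF nd])
  have eS: "e n \<in> S1 y" for n unfolding e_def by (rule enumerate_in_set[OF inf])
  have e1: "1 \<le> e n" for n using eS[of n] unfolding S1_def by auto
  obtain n0 where n0: "\<forall>n\<ge>n0. norm (real (apos y (Suc n)) / real (apos y n) - 1) < \<epsilon>"
    using LIMSEQ_D[OF rat \<epsilon>] by blast
  define n1 where "n1 = max n0 1"
  show "\<exists>N0. \<forall>N\<ge>N0. \<exists>j. 1 \<le> j \<and> real j \<le> \<epsilon> * real N + 1 \<and> bdigit y (N+j) = 1"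
  proof (rule exI[of _ "e n1"], intro allI impI)
    fix N assume N: "e n1 \<le> N"
    have ex: "\<exists>k. k \<in> S1 y \<and> N < k" using inf unfolding infinite_nat_iff_unbounded by blast
    define k where "k = (LEAST k. k \<in> S1 y \<and> N < k)"
    have k: "k \<in> S1 y" "N < k" using LeastI_ex[OF ex] unfolding k_def by auto
    obtain i where i: "e i = k" using enumerate_Ex[OF inf k(1)] unfolding e_def by blast
    have "e n1 < e i" using N k i by simp
    then have ni: "n1 < i" unfolding e_def using inf by simp
    then obtain m where m: "i = Suc m" by (cases i) auto
    have "e m < e i" unfolding e_def m using inf by simp
    then have em: "e m \<le> N" using eS[of m] not_less_Least[of "e m" "\<lambda>k. k \<in> S1 y \<and> N < k"] unfolding k_def[symmetric] i[symmetric]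
      by (metis i not_le)
    have "i \<ge> n0" using ni unfolding n1_def by simp
    then have "norm (real (apos y (Suc i)) / real (apos y i) - 1) < \<epsilon>" using n0 by blast
    moreover have "apos y (Suc i) = e i" unfolding e_def by (rule apos_Suc)
    moreover have "apos y i = e m" unfolding e_def m by (rule apos_Suc)
    ultimately have "real (e i) / real (e m) < 1 + \<epsilon>" by simp
    then have "real (e i) < (1 + \<epsilon>) * real (e m)" using e1[of m] by (simp add: field_simps)
    also have "\<dots> \<le> (1 + \<epsilon>) * real N" using em \<epsilon> by (intro mult_left_mono) auto
    finally have ki: "real k < (1 + \<epsilon>) * real N" using i by simp
    show "\<exists>j. 1 \<le> j \<and> real j \<le> \<epsilon> * real N + 1 \<and> bdigit y (N+j) = 1"
    proof (intro exI[of _ "k - N"] conjI)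
      show "1 \<le> k - N" using k by simp
      show "real (k - N) \<le> \<epsilon> * real N + 1" using k ki by (simp add: of_nat_diff algebra_simps)
      show "bdigit y (N + (k - N)) = 1" using k unfolding S1_def by simp
    qed
  qed
qed

lemma avg_compl:
  assumes nd: "\<not> dyadic y" and n: "1 \<le> n"
  shows "digit_avg (1 - y) n = 1 - digit_avg y n"
proof -
  have "(\<Sum>k=1..n. real (bdigit (1 - y) k)) = (\<Sum>k=1..n. 1 - real (bdigit y k))"
  proof (rule sum.cong)
    fix k assume "k \<in> {1..n}"
    then have "bdigit (1 - y) k = 1 - bdigit y k" using bdigit_compl[OF nd] by auto
    then show "real (bdigit (1 - y) k) = 1 - real (bdigit y k)" using bdigit_le1[of y k] by (simp add: of_nat_diff)
  qed simp
  also have "\<dots> = real n - (\<Sum>k=1..n. real (bdigit y k))" by (simp add: sum_subtractf)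
  finally show ?thesis unfolding digit_avg_def using n by (simp add: field_simps)
qed

lemma conv_compl:
  assumes nd: "\<not> dyadic y" and conv: "convergent (digit_avg y)"
  shows "convergent (digit_avg (1 - y)) \<and> d1 (1 - y) = 1 - d1 y"
proof -
  have l: "digit_avg y \<longlonglongrightarrow> d1 y" using conv unfolding d1_def by (simp add: convergent_LIMSEQ_iff)
  have "(\<lambda>n. 1 - digit_avg y n) \<longlonglongrightarrow> 1 - d1 y" by (intro tendsto_intros l)
  moreover have "eventually (\<lambda>n. 1 - digit_avg y n = digit_avg (1 - y) n) sequentially"
    using avg_compl[OF nd] by (intro eventually_sequentiallyI[of 1]) auto
  ultimately have l2: "digit_avg (1 - y) \<longlonglongrightarrow> 1 - d1 y" by (rule Lim_transform_eventually)
  then show ?thesis using limI[OF l2] by (auto simp: convergent_def d1_def)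
qed

lemma avg_bounds: "0 \<le> digit_avg y n \<and> digit_avg y n \<le> 1"
proof (cases "n = 0")
  case True then show ?thesis unfolding digit_avg_def by simp
next
  case False
  have "(\<Sum>k=1..n. real (bdigit y k)) \<le> (\<Sum>k=1..n. 1)" using bdigit_le1 by (intro sum_mono) auto
  then have "(\<Sum>k=1..n. real (bdigit y k)) \<le> real n" by simp
  moreover have "0 \<le> (\<Sum>k=1..n. real (bdigit y k))" by (intro sum_nonneg) auto
  ultimately show ?thesis unfolding digit_avg_def using False by (simp add: field_simps)
qed

lemma d1_bounds: assumes "convergent (digit_avg y)" shows "0 \<le> d1 y \<and> d1 y \<le> 1"
proof -
  have l: "digit_avg y \<longlonglongrightarrow> d1 y" using assms unfolding d1_def by (simp add: convergent_LIMSEQ_iff)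
  have "0 \<le> d1 y" by (rule LIMSEQ_le_const[OF l]) (use avg_bounds in auto)
  moreover have "d1 y \<le> 1" by (rule LIMSEQ_le_const2[OF l]) (use avg_bounds in auto)
  ultimately show ?thesis by simp
qed

lemma DD_avg: "1 \<le> N \<Longrightarrow> DD N y / real N = 1 - 2 * digit_avg y N"
proof -
  assume N: "1 \<le> N"
  have "DD N y = real N - 2 * (\<Sum>m<N. real (bdigit y (Suc m)))"
    unfolding DD_def by (simp add: sum_subtractf sum_distrib_left)
  moreover have "(\<Sum>m<N. real (bdigit y (Suc m))) = (\<Sum>k=1..N. real (bdigit y k))"
    using sum.atLeast1_atMost_eq[of "\<lambda>k. real (bdigit y k)" N] by simp
  ultimately show ?thesis unfolding digit_avg_def using N by (simp add: field_simps)
qed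

lemma DD_lim_from_conv:
  assumes conv: "convergent (digit_avg y)"
  shows "(\<lambda>N. DD N y / real N) \<longlonglongrightarrow> 1 - 2 * d1 y"
proof -
  have l: "digit_avg y \<longlonglongrightarrow> d1 y" using conv unfolding d1_def by (simp add: convergent_LIMSEQ_iff)
  have "(\<lambda>n. 1 - 2 * digit_avg y n) \<longlonglongrightarrow> 1 - 2 * d1 y" by (intro tendsto_intros l)
  moreover have "eventually (\<lambda>n. 1 - 2 * digit_avg y n = DD n y / real n) sequentially"
    using DD_avg by (intro eventually_sequentiallyI[of 1]) auto
  ultimately show ?thesis by (rule Lim_transform_eventually)
qed

lemma conv_from_DD:
  assumes l: "(\<lambda>N. DD N y / real N) \<longlonglongrightarrow> c"
  shows "convergent (digit_avg y) \<and> d1 y = (1 - c) / 2"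
proof -
  have "(\<lambda>n. (1 - DD n y / real n) / 2) \<longlonglongrightarrow> (1 - c) / 2" by (intro tendsto_intros l) simp
  moreover have "eventually (\<lambda>n. (1 - DD n y / real n) / 2 = digit_avg y n) sequentially"
    using DD_avg by (intro eventually_sequentiallyI[of 1]) auto
  ultimately have l2: "digit_avg y \<longlonglongrightarrow> (1 - c) / 2" by (rule Lim_transform_eventually)
  then show ?thesis unfolding d1_def using limI[OF l2] by (auto simp: convergent_def)
qed

lemma OS_compl_run:
  assumes nd: "\<not> dyadic y" and os: "OS (1 - y)"
  shows "\<forall>\<epsilon>>0. \<exists>N0. \<forall>N\<ge>N0. 2 powr (-(\<epsilon>*real N+1)) \<le> 1 - (2^N * y - of_int \<lfloor>(2::real)^N * y\<rfloor>)"
  using os unfolding OS_def frac_compl[OF nd] by simp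

lemma IF_direction:
  assumes nd: "\<not> dyadic x" and dr: "density_regular x"
  shows "(QG x \<longlongrightarrow> d0 x - d1 x) (at 0)"
proof -
  have conv: "convergent (digit_avg x)" using dr unfolding density_regular_def by simp
  have nd': "\<not> dyadic (1 - x)" by (rule nondyadic_compl[OF nd])
  have cc: "convergent (digit_avg (1 - x))" "d1 (1 - x) = 1 - d1 x" using conv_compl[OF nd conv] by auto
  have b: "0 \<le> d1 x" "d1 x \<le> 1" using d1_bounds[OF conv] by auto
  have os: "OS x \<and> OS (1 - x)"
  proof -
    consider "0 < d1 x \<and> d1 x < 1"
      | "d1 x = 0 \<and> (\<lambda>n. real (apos x (Suc n)) / real (apos x n)) \<longlonglongrightarrow> 1"
      | "d1 x = 1 \<and> (\<lambda>n. real (bpos x (Suc n)) / real (bpos x n)) \<longlonglongrightarrow> 1"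
      using dr unfolding density_regular_def by blast
    then show ?thesis
    proof cases
      case 1 then show ?thesis using OS_pos[OF conv] OS_pos[OF cc(1)] cc(2) by auto
    next
      case 2 then show ?thesis using OS_ratio[OF nd] OS_pos[OF cc(1)] cc(2) by auto
    next
      case 3
      have "(\<lambda>n. real (apos (1 - x) (Suc n)) / real (apos (1 - x) n)) \<longlonglongrightarrow> 1"
        using 3 unfolding bpos_def by simp
      then show ?thesis using OS_ratio[OF nd'] OS_pos[OF conv] 3 by auto
    qed
  qed
  have run: "\<And>\<epsilon>. \<epsilon> > 0 \<Longrightarrow> \<exists>N0. \<forall>N\<ge>N0.
        2 powr (-(\<epsilon>*real N+1)) \<le> 2^N * x - of_int \<lfloor>(2::real)^N * x\<rfloor> \<and>
        2 powr (-(\<epsilon>*real N+1)) \<le> 1 - (2^N * x - of_int \<lfloor>(2::real)^N * x\<rfloor>)"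
  proof -
    fix \<epsilon> :: real assume \<epsilon>: "\<epsilon> > 0"
    obtain N1 where N1: "\<forall>N\<ge>N1. 2 powr (-(\<epsilon>*real N+1)) \<le> 2^N * x - of_int \<lfloor>(2::real)^N * x\<rfloor>"
      using os \<epsilon> unfolding OS_def by blast
    obtain N2 where N2: "\<forall>N\<ge>N2. 2 powr (-(\<epsilon>*real N+1)) \<le> 1 - (2^N * x - of_int \<lfloor>(2::real)^N * x\<rfloor>)"
      using OS_compl_run[OF nd] os \<epsilon> by blast
    show "\<exists>N0. \<forall>N\<ge>N0.
        2 powr (-(\<epsilon>*real N+1)) \<le> 2^N * x - of_int \<lfloor>(2::real)^N * x\<rfloor> \<and>
        2 powr (-(\<epsilon>*real N+1)) \<le> 1 - (2^N * x - of_int \<lfloor>(2::real)^N * x\<rfloor>)"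
      using N1 N2 by (intro exI[of _ "max N1 N2"]) auto
  qed
  have "(QG x \<longlongrightarrow> 1 - 2 * d1 x) (at 0)"
    by (rule IFcore[OF DD_lim_from_conv[OF conv] _ run]) (use b in auto)
  then show ?thesis unfolding d0_def by (simp add: algebra_simps)
qed



lemma tail_pt:
  assumes k: "A \<le> k"
  shows "real (k - A) * (1/2)^k \<le> tail A ((2 * of_int J + 1) / 2^A - (1/2)^k)"
proof -
  define p where "p = (2 * of_int J + 1) / (2::real)^A"
  have "(\<Sum>i<k - A. gg (2^(A+i) * (p - (1/2)^k)) / 2^(A+i)) = (\<Sum>i<k - A. (1/2::real)^k)"
  proof (rule sum.cong)
    fix i assume i: "i \<in> {..<k - A}"
    obtain q where q: "k = A + i + Suc q" using i by (metis add_Suc_right diff_diff_left less_iff_Suc_add lessThan_iff less_diff_conv add.commute)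
    have e1: "(2::real)^(A+i) * p = of_int ((2 * J + 1) * 2^i)" unfolding p_def by (simp add: power_add)
    have e2: "(2::real)^(A+i) * (1/2)^k = (1/2)^(Suc q)" unfolding q by (simp add: power_add power_one_over)
    have e3: "(2::real)^(A+i) * (p - (1/2)^k) = of_int ((2 * J + 1) * 2^i) - (1/2)^(Suc q)"
      by (simp only: right_diff_distrib e1 e2)
    have "gg (2^(A+i) * (p - (1/2)^k)) = gg ((1/2::real)^(Suc q))"
      unfolding e3 by (rule gg_int_minus)
    also have "\<dots> = (1/2)^(Suc q)" by (rule gg_small) (auto simp: power_le_one_iff)
    finally show "gg (2^(A+i) * (p - (1/2)^k)) / 2^(A+i) = (1/2)^k" unfolding q by (simp add: power_add power_one_over)
  qed simp
  also have "\<dots> = real (k - A) * (1/2)^k" by simp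
  finally have "real (k - A) * (1/2)^k = (\<Sum>i<k - A. gg (2^(A+i) * (p - (1/2)^k)) / 2^(A+i))" by simp
  also have "\<dots> \<le> tail A (p - (1/2)^k)" by (rule tail_lower)
  finally show ?thesis unfolding p_def .
qed

lemma head_pt:
  assumes k: "Suc a \<le> k"
  shows "gg (2^a * ((2 * of_int J + 1) / 2^(Suc a) - (1/2)^k)) / 2^a = 1 / 2^(Suc a) - (1/2::real)^k"
proof -
  define s where "s = (2::real)^a * (1/2)^k"
  have s: "0 \<le> s" "s \<le> 1/2"
  proof -
    show "0 \<le> s" unfolding s_def by simp
    obtain q where q: "k = Suc a + q" using k by (metis le_Suc_ex)
    have "s = (1/2)^(Suc q)" unfolding s_def q by (simp add: power_add power_one_over)
    then show "s \<le> 1/2" by (simp add: power_le_one_iff)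
  qed
  have e: "(2::real)^a * ((2 * of_int J + 1) / 2^(Suc a) - (1/2)^k) = of_int J + 1/2 - s"
    unfolding s_def by (simp add: field_simps)
  have "gg (of_int J + 1/2 - s) = (of_int J + 1/2 - s) - of_int (2*J) / 2"
    using gg_lin[of "2*J" "of_int J + 1/2 - s"] s by simp
  then have "gg (of_int J + 1/2 - s) = 1/2 - s" by simp
  then show ?thesis unfolding e s_def by (simp add: field_simps)
qed

lemma between_not_S1:
  assumes inf: "infinite (S1 x)" and lo: "enumerate (S1 x) m < k" and hi: "k < enumerate (S1 x) (Suc m)"
  shows "k \<notin> S1 x"
proof
  assume "k \<in> S1 x"
  then obtain i where i: "enumerate (S1 x) i = k" using enumerate_Ex[OF inf] by blast
  then have "m < i" "i < Suc m" using lo hi inf by auto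
  then show False by simp
qed



lemma ratio_core:
  assumes nd: "\<not> dyadic x" and lim: "(QG x \<longlongrightarrow> 1) (at 0)" and \<delta>: "0 < \<delta>" "\<delta> \<le> 1"
  shows "\<exists>A0. \<forall>m. A0 \<le> enumerate (S1 x) m \<longrightarrow>
           real (enumerate (S1 x) (Suc m)) \<le> (1 + \<delta>) * real (enumerate (S1 x) m)"
proof -
  define \<eta> where "\<eta> = \<delta> / 4"
  have \<eta>: "0 < \<eta>" using \<delta> unfolding \<eta>_def by simp
  obtain d where d: "d > 0" and bd: "\<forall>h. h \<noteq> 0 \<and> \<bar>h\<bar> < d \<longrightarrow> \<bar>GG (x+h) - GG x - 1*h*Lg h\<bar> \<le> \<eta>*\<bar>h\<bar>*Lg h"
    using lim_bound[OF lim \<eta>] by blast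
  have d8: "0 < \<delta> / 8" using \<delta> by simp
  obtain r0 where r0: "(1/2::real)^r0 < \<delta> / 8" using real_arch_pow_inv[OF d8, of "1/2"] by auto
  define r where "r = Suc r0"
  define \<rho> where "\<rho> = (1/2::real)^r"
  have \<rho>: "0 < \<rho>" "2 * \<rho> = (1/2)^r0" "\<rho> \<le> 1/2"
    unfolding \<rho>_def r_def by (auto simp: power_le_one_iff)
  have \<rho>8: "\<rho> \<le> \<delta> / 8" using \<rho> r0 by (smt (verit) zero_le_power zero_le_divide_1_iff)
  have d2: "0 < d / 2" using d by simp
  obtain A1 where A1: "(1/2::real)^A1 < d / 2" using real_arch_pow_inv[OF d2, of "1/2"] by auto
  obtain A2 where A2: "(4 * real r + 4) / \<delta> < real A2" using reals_Archimedean2 by blast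
  define e where "e = enumerate (S1 x)"
  have inf: "infinite (S1 x)" by (rule S1_infinite[OF nd])
  show ?thesis
  proof (rule exI[of _ "max (max A1 A2) 2"], intro allI impI)
    fix m assume m: "max (max A1 A2) 2 \<le> enumerate (S1 x) m"
    define A where "A = e m"
    define B where "B = e (Suc m)"
    show "real (enumerate (S1 x) (Suc m)) \<le> (1 + \<delta>) * real (enumerate (S1 x) m)"
    proof (rule ccontr)
      assume "\<not> ?thesis"
      then have BA: "(1 + \<delta>) * real A < real B" unfolding A_def B_def e_def by simp
      have AS: "A \<in> S1 x" unfolding A_def e_def by (rule enumerate_in_set[OF inf])
      have AB: "A < B" unfolding A_def B_def e_def using inf by simp
      have Abig: "A1 \<le> A" "A2 \<le> A" "2 \<le> A" using m unfolding A_def e_def by auto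
      have dA: "4 * real r + 4 < \<delta> * real A"
      proof -
        have "(4 * real r + 4) / \<delta> < real A" using A2 Abig by linarith
        then show ?thesis using \<delta> by (simp add: field_simps)
      qed
      have rA: "A + r < B"
      proof -
        have "real A + real r < real A + \<delta> * real A" using dA by linarith
        also have "\<dots> < real B" using BA by (simp add: algebra_simps)
        finally show ?thesis by linarith
      qed
      define k where "k = B - r"
      have kA: "A < k" "real k = real B - real r" "B - 1 = k + r0" using rA unfolding k_def r_def by auto
      obtain a where a: "A = Suc a" using Abig by (cases A) auto
      have dig1: "bdigit x (Suc a) = 1" using AS a unfolding S1_def by simp
      have z: "\<And>i. 1 \<le> i \<Longrightarrow> i \<le> B - 1 - A \<Longrightarrow> bdigit x (A+i) = 0"
      proof -
        fix i assume i: "1 \<le> i" "i \<le> B - 1 - A"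
        have "A + i \<notin> S1 x" using between_not_S1[OF inf, of m "A + i"] i AB unfolding A_def B_def e_def by simp
        then show "bdigit x (A+i) = 0" using bdigit_cases[of x "A+i"] i unfolding S1_def by auto
      qed
      define J where "J = \<lfloor>(2::real)^a * x\<rfloor>"
      have fl: "\<lfloor>(2::real)^A * x\<rfloor> = 2 * J + 1" unfolding a J_def using floor_Suc[of a x] dig1 by simp
      define p where "p = (2 * of_int J + 1) / (2::real)^A"
      define w where "w = x - p"
      define t where "t = (1/2::real)^k"
      have t: "0 < t" unfolding t_def by simp
      have frl: "2^A * x - of_int \<lfloor>(2::real)^A * x\<rfloor> < (1/2::real)^(B - 1 - A)"
        by (rule frac_lt_zero_digits[OF z])
      have frp: "0 < 2^A * x - of_int \<lfloor>(2::real)^A * x\<rfloor>" by (rule nondyadic_frac_pos[OF nd])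
      have wfr: "w = (2^A * x - of_int \<lfloor>(2::real)^A * x\<rfloor>) / 2^A"
        unfolding w_def p_def fl by (simp add: field_simps)
      have w0: "0 < w" using frp unfolding wfr by simp
      have w1: "w \<le> 2 * \<rho> * t"
      proof -
        have "w < (1/2::real)^(B - 1 - A) / 2^A" unfolding wfr using frl by (intro divide_strict_right_mono) auto
        also have "\<dots> = (1/2)^(B - 1)"
        proof -
          have "B - 1 = A + (B - 1 - A)" using AB by simp
          then have "(1/2::real)^(B - 1) = (1/2)^A * (1/2)^(B - 1 - A)" by (metis power_add)
          then show ?thesis by (simp add: power_one_over)
        qed
        also have "\<dots> = 2 * \<rho> * t" unfolding t_def kA(3) power_add \<rho>(2)[symmetric] by simp
        finally show ?thesis by simp
      qed
      have "2 * \<rho> * t \<le> 1 * t" using \<rho> t by (intro mult_right_mono) auto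
      then have wt: "w \<le> t" using w1 by linarith
      define h where "h = - (w + t)"
      have h0: "h \<noteq> 0" "\<bar>h\<bar> = w + t" unfolding h_def using w0 t by auto
      obtain k' where k': "k = Suc k'" using kA by (cases k) auto
      have habs: "\<bar>h\<bar> \<le> (1/2)^k'" using h0 wt unfolding t_def k' by simp
      have tA: "t \<le> (1/2)^A" unfolding t_def using kA by (intro power_decreasing) auto
      have hd: "\<bar>h\<bar> < d"
      proof -
        have "\<bar>h\<bar> \<le> 2 * (1/2)^A" using h0 wt tA by simp
        also have "\<dots> \<le> 2 * (1/2)^A1" using Abig by (simp add: power_decreasing)
        also have "\<dots> < d" using A1 by simp
        finally show ?thesis .
      qed
      define L where "L = Lg h"
      have Lk: "real k' \<le> L" unfolding L_def by (rule Lg_ge[OF h0(1) habs])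
      have up: "GG (x + h) - GG x \<le> h * L + \<eta> * \<bar>h\<bar> * L"
        using bd[rule_format, of h] h0 hd unfolding L_def by auto
      have up2: "GG (x + h) - GG x \<le> - ((1 - \<eta>) * (t * real k'))"
      proof -
        have "h * L + \<eta> * \<bar>h\<bar> * L = - ((1 - \<eta>) * ((w + t) * L))" unfolding h_def using h0 by (simp add: algebra_simps)
        moreover have "t * real k' \<le> (w + t) * L"
        proof -
          have "t * real k' \<le> t * L" using Lk t by (intro mult_left_mono) auto
          also have "\<dots> \<le> (w + t) * L" using w0 Lk by (intro mult_right_mono) auto
          finally show ?thesis .
        qed
        moreover have "0 \<le> 1 - \<eta>" using \<delta> unfolding \<eta>_def by simp
        ultimately show ?thesis using up by (smt (verit) mult_left_mono)
      qed
      have xh: "x + h = p - t" unfolding h_def w_def by simp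
      have p2: "(0::real) < 2^a" by simp
      have Aa: "(2::real)^A = 2 * 2^a" unfolding a by simp
      have u: "of_int J / 2^a \<le> p - t" "p - t \<le> (of_int J + 1) / 2^a"
      proof -
        have "p - (1/2)^A = of_int J / 2^a" unfolding p_def Aa by (simp add: field_simps power_one_over Aa)
        then show "of_int J / 2^a \<le> p - t" using tA by linarith
        have "p \<le> (of_int J + 1) / 2^a" unfolding p_def Aa using p2 by (simp add: field_simps)
        then show "p - t \<le> (of_int J + 1) / 2^a" using t by linarith
      qed
      have v: "of_int J / 2^a \<le> x" "x \<le> (of_int J + 1) / 2^a"
      proof -
        have "of_int J \<le> 2^a * x" unfolding J_def by simp
        then show "of_int J / 2^a \<le> x" using p2 by (simp add: field_simps)
        have "2^a * x < of_int J + 1" unfolding J_def by linarith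
        then show "x \<le> (of_int J + 1) / 2^a" using p2 by (simp add: field_simps)
      qed
      have G: "GG (p - t) - GG x = DD a x * ((p - t) - x) + tail a (p - t) - tail a x"
        by (rule GG_interval[OF J_def u v])
      have ptx: "(p - t) - x = - (w + t)" unfolding w_def by simp
      have DDb: "DD a x * (w + t) \<le> real a * (w + t)"
        using DD_bound[of a x] w0 t by (intro mult_right_mono) auto
      have T1: "tail a (p - t) = 1 / 2^A - t + tail A (p - t)"
        using tail_Suc[of a "p - t"] head_pt[of a k J] kA unfolding p_def t_def a by simp
      have T2: "real (k - A) * t \<le> tail A (p - t)"
        using tail_pt[of A k J] kA unfolding p_def t_def by simp
      have T3: "tail a x \<le> 1 / 2^A + tail A x"
      proof -
        have "gg (2^a * x) / 2^a \<le> (1/2) / 2^a" using gg_half by (intro divide_right_mono) auto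
        then show ?thesis using tail_Suc[of a x] unfolding a by simp
      qed
      have T4: "tail A x \<le> real (B - 1 - A) * w + 2 * \<rho> * t"
      proof -
        have tp: "tail A p = 0" using tail_dyadic[of A "2 * J + 1"] unfolding p_def by simp
        have "\<bar>tail A x - tail A p\<bar> \<le> real (B - 1 - A) * \<bar>x - p\<bar> + (1/2)^(A + (B - 1 - A))" by (rule tail_diff)
        moreover have "(1/2::real)^(A + (B - 1 - A)) = 2 * \<rho> * t"
        proof -
          have e: "A + (B - 1 - A) = k + r0" using AB kA by simp
          have "(1/2::real)^(A + (B - 1 - A)) = (1/2)^(k + r0)" unfolding e ..
          also have "\<dots> = 2 * \<rho> * t" unfolding t_def power_add \<rho>(2)[symmetric] by simp
          finally show ?thesis .
        qed
        moreover have "\<bar>x - p\<bar> = w" unfolding w_def using w0 w_def by simp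
        ultimately show ?thesis using tp by simp
      qed
      have W: "real (B - 1 - A) * w + real a * w \<le> (real B - 2) * (2 * \<rho> * t)"
      proof -
        have e: "real (B - 1 - A) + real a = real B - 2" using AB a by (simp add: of_nat_diff)
        have "real (B - 1 - A) * w + real a * w = (real (B - 1 - A) + real a) * w" by (simp only: distrib_right)
        also have "\<dots> = (real B - 2) * w" unfolding e ..
        also have "\<dots> \<le> (real B - 2) * (2 * \<rho> * t)" using w1 AB a by (intro mult_left_mono) auto
        finally show ?thesis .
      qed
      have main: "- (real a * t) - t + real (k - A) * t - ((real B - 2) * (2 * \<rho> * t)) - 2 * \<rho> * t
           \<le> - ((1 - \<eta>) * (t * real k'))"
      proof -
        have "GG (p - t) - GG x \<le> - ((1 - \<eta>) * (t * real k'))" using up2 xh by simp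
        moreover have "GG (p - t) - GG x \<ge> - (real a * (w + t)) - t + real (k - A) * t
             - real (B - 1 - A) * w - 2 * \<rho> * t"
        proof -
          have G2: "GG (p - t) - GG x = - (DD a x * (w + t)) + tail a (p - t) - tail a x" 
          proof -
            have "DD a x * ((p - t) - x) = - (DD a x * (w + t))" unfolding ptx by (simp add: algebra_simps)
            then show ?thesis using G by linarith
          qed
          show ?thesis using G2 DDb T1 T2 T3 T4 by linarith
        qed
        moreover have "real a * (w + t) = real a * w + real a * t" by (simp add: algebra_simps)
        ultimately show ?thesis using W by linarith
      qed
      define \<Phi> where "\<Phi> = real k - 2 * real A - 2 * (real B - 1) * \<rho> + (1 - \<eta>) * (real k - 1)"
      have "t * \<Phi> = - (real a * t) - t + real (k - A) * t - ((real B - 2) * (2 * \<rho> * t)) - 2 * \<rho> * t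
           + (1 - \<eta>) * (t * real k')"
        unfolding \<Phi>_def using kA a k' by (simp add: of_nat_diff algebra_simps)
      then have "t * \<Phi> \<le> 0" using main by linarith
      then have Phi: "\<Phi> \<le> 0" using t by (simp add: mult_le_0_iff)
      have f1: "\<eta> * (real k - 1) \<le> \<delta> * real B / 4"
      proof -
        have "\<eta> * (real k - 1) \<le> \<eta> * real B" using kA \<eta> by (intro mult_left_mono) auto
        then show ?thesis unfolding \<eta>_def by simp
      qed
      have f2: "(real B - 1) * \<rho> \<le> \<delta> * real B / 8"
      proof -
        have "(real B - 1) * \<rho> \<le> real B * \<rho>" using \<rho> by (intro mult_right_mono) auto
        also have "\<dots> \<le> real B * (\<delta> / 8)" using \<rho>8 by (intro mult_left_mono) auto
        finally show ?thesis by (simp add: mult.commute)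
      qed
      have f3: "2 * real A \<le> 2 * real B - \<delta> * real B"
      proof -
        have "2 * real B - \<delta> * real B - 2 * real A = real A * \<delta> * (1 - \<delta>) + (real B - real A * (1 + \<delta>)) * (2 - \<delta>)"
          by (simp add: algebra_simps)
        moreover have "0 \<le> real A * \<delta> * (1 - \<delta>)" using \<delta> by simp
        moreover have "0 \<le> (real B - real A * (1 + \<delta>)) * (2 - \<delta>)" using BA \<delta> by (intro mult_nonneg_nonneg) (auto simp: algebra_simps)
        ultimately show ?thesis by linarith
      qed
      have f4: "4 * real r + 4 < \<delta> * real B"
      proof -
        have "\<delta> * real A \<le> \<delta> * real B" using AB \<delta> by (intro mult_left_mono) auto
        then show ?thesis using dA by linarith
      qed
      have f5: "(1 - \<eta>) * (real k - 1) = (real k - 1) - \<eta> * (real k - 1)" by (simp add: algebra_simps)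
      have f6: "2 * (real B - 1) * \<rho> = 2 * ((real B - 1) * \<rho>)" by simp
      show False using Phi f1 f2 f3 f4 f5 f6 kA unfolding \<Phi>_def by linarith
    qed
  qed
qed



lemma ratio_only:
  assumes nd: "\<not> dyadic x" and lim: "(QG x \<longlongrightarrow> 1) (at 0)"
  shows "(\<lambda>n. real (apos x (Suc n)) / real (apos x n)) \<longlonglongrightarrow> 1"
proof (rule LIMSEQ_I)
  fix \<epsilon> :: real assume \<epsilon>: "0 < \<epsilon>"
  define \<delta> where "\<delta> = min \<epsilon> 1 / 2"
  have \<delta>: "0 < \<delta>" "\<delta> \<le> 1" "\<delta> < \<epsilon>" using \<epsilon> unfolding \<delta>_def by auto
  obtain A0 where A0: "\<forall>m. A0 \<le> enumerate (S1 x) m \<longrightarrow>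
           real (enumerate (S1 x) (Suc m)) \<le> (1 + \<delta>) * real (enumerate (S1 x) m)"
    using ratio_core[OF nd lim \<delta>(1,2)] by blast
  have inf: "infinite (S1 x)" by (rule S1_infinite[OF nd])
  show "\<exists>no. \<forall>n\<ge>no. norm (real (apos x (Suc n)) / real (apos x n) - 1) < \<epsilon>"
  proof (rule exI[of _ "Suc A0"], intro allI impI)
    fix n assume n: "Suc A0 \<le> n"
    then obtain m where m: "n = Suc m" by (cases n) auto
    define e where "e = enumerate (S1 x)"
    have em: "A0 \<le> e m" using le_enumerate[OF inf, of m] n m unfolding e_def by simp
    have up: "real (e (Suc m)) \<le> (1 + \<delta>) * real (e m)" using A0 em unfolding e_def by blast
    have lo: "e m < e (Suc m)" unfolding e_def using inf by simp
    have pos: "1 \<le> e m" using enumerate_in_set[OF inf, of m] unfolding e_def S1_def by simp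
    have a1: "apos x (Suc n) = e (Suc m)" unfolding e_def m by (rule apos_Suc)
    have a2: "apos x n = e m" unfolding e_def m by (rule apos_Suc)
    have r1: "real (e (Suc m)) / real (e m) \<le> 1 + \<delta>" using up pos by (simp add: field_simps)
    have r2: "1 \<le> real (e (Suc m)) / real (e m)" using lo pos by (simp add: field_simps)
    show "norm (real (apos x (Suc n)) / real (apos x n) - 1) < \<epsilon>"
      unfolding a1 a2 using r1 r2 \<delta> by simp
  qed
qed

lemma QG_sym: "QG (1 - x) h = - QG x (- h)"
proof -
  have e: "1 - x + h = 1 - (x - h)" by simp
  have "GG (1 - x + h) = GG (x - h)" unfolding e by (rule GG_sym)
  then have "GG (1 - x + h) = GG (x + - h)" by simp
  moreover have "GG (1 - x) = GG x" by (rule GG_sym)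
  ultimately show ?thesis unfolding QG_def Lg_neg by (simp add: field_simps)
qed

lemma QG_sym_lim:
  assumes "(QG x \<longlongrightarrow> c) (at 0)" shows "(QG (1 - x) \<longlongrightarrow> - c) (at 0)"
  unfolding LIM_eq
proof (intro allI impI)
  fix r :: real assume r: "0 < r"
  obtain s where s: "s > 0" "\<forall>h. h \<noteq> 0 \<and> norm (h - 0) < s \<longrightarrow> norm (QG x h - c) < r"
    using assms r unfolding LIM_eq by blast
  show "\<exists>s>0. \<forall>h. h \<noteq> 0 \<and> norm (h - 0) < s \<longrightarrow> norm (QG (1 - x) h - - c) < r"
  proof (intro exI[of _ s] conjI allI impI)
    show "0 < s" by (rule s(1))
    fix h :: real assume h: "h \<noteq> 0 \<and> norm (h - 0) < s"
    then have "norm (QG x (-h) - c) < r" using s(2)[rule_format, of "-h"] by simp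
    then show "norm (QG (1 - x) h - - c) < r" unfolding QG_sym by (simp add: abs_minus_commute)
  qed
qed

lemma takagi_QG_eq:
  assumes x: "0 < x" "x < 1"
  shows "((\<lambda>h. (takagi (x + h) - takagi x) / (h * log 2 (1 / \<bar>h\<bar>))) \<longlongrightarrow> l) (at 0) \<longleftrightarrow> (QG x \<longlongrightarrow> l) (at 0)"
proof (rule tendsto_cong)
  show "\<forall>\<^sub>F h in at 0. (takagi (x + h) - takagi x) / (h * log 2 (1 / \<bar>h\<bar>)) = QG x h"
    unfolding eventually_at
  proof (intro exI[of _ "min x (1 - x)"] conjI ballI impI)
    show "0 < min x (1 - x)" using x by simp
    fix h :: real assume h: "h \<noteq> 0 \<and> dist h 0 < min x (1 - x)"
    then have "0 \<le> x + h" "x + h \<le> 1" by (auto simp: dist_real_def)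
    then show "(takagi (x + h) - takagi x) / (h * log 2 (1 / \<bar>h\<bar>)) = QG x h"
      unfolding QG_def Lg_def using takagi_GG x by simp
  qed
qed

theorem theorem2:
  fixes x :: real
  assumes "0 < x" and "x < 1" and "\<not> dyadic x"
  shows "((\<exists>L. ((\<lambda>h. (takagi (x + h) - takagi x) / (h * log 2 (1 / \<bar>h\<bar>))) \<longlongrightarrow> L) (at 0))
           \<longleftrightarrow> density_regular x) \<and>
         (density_regular x \<longrightarrow>
         ((\<lambda>h. (takagi (x + h) - takagi x) / (h * log 2 (1 / \<bar>h\<bar>))) \<longlongrightarrow> d0 x - d1 x) (at 0))"
proof -
  note eq = takagi_QG_eq[OF assms(1,2)]
  have nd: "\<not> dyadic x" by (rule assms(3))
  have IF: "density_regular x \<Longrightarrow> (QG x \<longlongrightarrow> d0 x - d1 x) (at 0)" by (rule IF_direction[OF nd])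
  have ONLY: "density_regular x" if L: "(QG x \<longlongrightarrow> L) (at 0)" for L
  proof -
    have DL: "(\<lambda>N. DD N x / real N) \<longlonglongrightarrow> L" by (rule Dlim[OF nd L])
    have cv: "convergent (digit_avg x)" "d1 x = (1 - L) / 2" using conv_from_DD[OF DL] by auto
    have b: "0 \<le> d1 x" "d1 x \<le> 1" using d1_bounds[OF cv(1)] by auto
    consider "0 < d1 x \<and> d1 x < 1" | "d1 x = 0" | "d1 x = 1" using b by linarith
    then show ?thesis
    proof cases
      case 1 then show ?thesis unfolding density_regular_def using cv by simp
    next
      case 2
      then have "L = 1" using cv by simp
      then have "(\<lambda>n. real (apos x (Suc n)) / real (apos x n)) \<longlonglongrightarrow> 1" using ratio_only[OF nd] L by simp
      then show ?thesis unfolding density_regular_def using cv 2 by simp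
    next
      case 3
      then have "L = -1" using cv by simp
      then have "(QG (1 - x) \<longlongrightarrow> 1) (at 0)" using QG_sym_lim[OF L] by simp
      then have "(\<lambda>n. real (apos (1 - x) (Suc n)) / real (apos (1 - x) n)) \<longlonglongrightarrow> 1"
        using ratio_only[OF nondyadic_compl[OF nd]] by simp
      then show ?thesis unfolding density_regular_def bpos_def using cv 3 by simp
    qed
  qed
  show ?thesis using IF ONLY eq by blast
qed


end
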